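(* Let $N\geq 1$ and let $\mathcal{H}_{X_1},\dots,\mathcal{H}_{X_N}$ be finite-dimensional Hilbert spaces. Let $\rho=|V\rangle\langle V|$ be a pure state (unit vector $|V\rangle$) on $\mathcal{H}_{X_1}\otimes\cdots\otimes\mathcal{H}_{X_N}$ such that $H(X_1)_\rho\neq 0$ and $$I(X_1:X_i)_\rho=0\quad\text{for all } i=2,\dots,N.$$ Then $$\sum_{i=1}^N H(X_i)_\rho>1.$$
   Context: For a density operator $\sigma$ (positive semidefinite, trace one), its von Neumann entropy is $-\mathrm{Tr}[\sigma\log\sigma]=-\sum_i\lambda_i\log\lambda_i$ where $\lambda_i$ are the eigenvalues of $\sigma$ and $\log$ is the binary logarithm (with $0\log 0=0$). For a subset $\mathcal{X}$ of the systems $\{X_1,\dots,X_N\}$, $\rho_{\mathcal{X}}$ is the reduced state obtained by taking the partial trace of $\rho$ over the tensor factors not in $\mathcal{X}$, and $H(\mathcal{X})_\rho$ denotes the von Neumann entropy of $\rho_{\mathcal{X}}$ (e.g. $H(X_iX_j)_\rho$ is the entropy of $\rho_{X_iX_j}$). The quantum mutual information is $I(X_i:X_j)_\rho=H(X_i)_\rho+H(X_j)_\rho-H(X_iX_j)_\rho$. *)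

theory Defs
  imports Complex_Main "Jordan_Normal_Form.Spectral_Radius"
begin

text \<open>Sites X_1,...,X_N are numbered 0,...,N-1; site k has dimension d k.
  A basis vector of the tensor product H_{X_1} (x) ... (x) H_{X_N} is encoded by a
  natural number n < prod d (mixed radix, site 0 least significant);
  its k-th digit is the basis index in H_{X_(k+1)}.\<close>

definition tdim :: "(nat \<Rightarrow> nat) \<Rightarrow> nat list \<Rightarrow> nat" where
  "tdim d S = (\<Prod>t<length S. d (S ! t))"

definition ldigit :: "(nat \<Rightarrow> nat) \<Rightarrow> nat list \<Rightarrow> nat \<Rightarrow> nat \<Rightarrow> nat" where
  "ldigit d S t a = (a div (\<Prod>u<t. d (S ! u))) mod d (S ! t)"

definition sites :: "nat \<Rightarrow> nat list" where
  "sites N = [0..<N]"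

text \<open>Reduced state rho_S = Tr_{complement of S} |V><V| on the subsystems listed in S
  (a list of distinct sites), as a matrix w.r.t. the product basis of those sites.\<close>
definition reduced :: "nat \<Rightarrow> (nat \<Rightarrow> nat) \<Rightarrow> (nat \<Rightarrow> complex) \<Rightarrow> nat list \<Rightarrow> complex mat" where
  "reduced N d V S = mat (tdim d S) (tdim d S) (\<lambda>(a, b).
     \<Sum>(n, m) \<in> {(n, m). n < tdim d (sites N) \<and> m < tdim d (sites N)
        \<and> (\<forall>k<N. k \<notin> set S \<longrightarrow> ldigit d (sites N) k n = ldigit d (sites N) k m)
        \<and> (\<forall>t<length S. ldigit d (sites N) (S ! t) n = ldigit d S t a
                       \<and> ldigit d (sites N) (S ! t) m = ldigit d S t b)}.
       V n * cnj (V m))"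

definition xlogx :: "real \<Rightarrow> real" where
  "xlogx x = (if x = 0 then 0 else x * log 2 x)"

definition vn_entropy :: "complex mat \<Rightarrow> real" where
  "vn_entropy A = - (\<Sum>e \<in> spectrum A. real (order e (char_poly A)) * xlogx (Re e))"

definition H :: "nat \<Rightarrow> (nat \<Rightarrow> nat) \<Rightarrow> (nat \<Rightarrow> complex) \<Rightarrow> nat list \<Rightarrow> real" where
  "H N d V S = vn_entropy (reduced N d V S)"

definition mutual_info :: "nat \<Rightarrow> (nat \<Rightarrow> nat) \<Rightarrow> (nat \<Rightarrow> complex) \<Rightarrow> nat \<Rightarrow> nat \<Rightarrow> real" where
  "mutual_info N d V i j = H N d V [i] + H N d V [j] - H N d V [i, j]"

end

theory Submission
  imports Defs
begin

definition fmul :: "nat \<Rightarrow> (nat \<Rightarrow> nat \<Rightarrow> complex) \<Rightarrow> (nat \<Rightarrow> nat \<Rightarrow> complex) \<Rightarrow> nat \<Rightarrow> nat \<Rightarrow> complex" where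
  "fmul n X Y = (\<lambda>i j. \<Sum>k<n. X i k * Y k j)"

definition fadj :: "(nat \<Rightarrow> nat \<Rightarrow> complex) \<Rightarrow> nat \<Rightarrow> nat \<Rightarrow> complex" where
  "fadj X = (\<lambda>i j. cnj (X j i))"

definition idf :: "nat \<Rightarrow> nat \<Rightarrow> complex" where
  "idf = (\<lambda>i j. if i = j then 1 else 0)"

definition feq :: "nat \<Rightarrow> (nat \<Rightarrow> nat \<Rightarrow> complex) \<Rightarrow> (nat \<Rightarrow> nat \<Rightarrow> complex) \<Rightarrow> bool" where
  "feq n X Y = (\<forall>i<n. \<forall>j<n. X i j = Y i j)"

definition unit_f :: "nat \<Rightarrow> (nat \<Rightarrow> nat \<Rightarrow> complex) \<Rightarrow> bool" where
  "unit_f n U = (feq n (fmul n U (fadj U)) idf \<and> feq n (fmul n (fadj U) U) idf)"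

definition herm :: "nat \<Rightarrow> (nat \<Rightarrow> nat \<Rightarrow> complex) \<Rightarrow> bool" where
  "herm n A = feq n (fadj A) A"

lemma fmul_assoc: "fmul n (fmul n X Y) Z = fmul n X (fmul n Y Z)"
  unfolding fmul_def
  by (auto simp: sum_distrib_left sum_distrib_right mult.assoc intro!: ext sum.swap[THEN trans])

lemma fadj_fmul: "fadj (fmul n X Y) = fmul n (fadj Y) (fadj X)"
  unfolding fmul_def fadj_def by (auto intro!: ext simp: mult.commute)

lemma fadj_fadj[simp]: "fadj (fadj X) = X"
  unfolding fadj_def by auto

lemma fmul_cong: "feq n X X' \<Longrightarrow> feq n Y Y' \<Longrightarrow> feq n (fmul n X Y) (fmul n X' Y')"
  unfolding feq_def fmul_def by auto

lemma fmul_idf_right: "j < n \<Longrightarrow> fmul n X idf i j = X i j"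
  unfolding fmul_def idf_def by (simp add: if_distrib[of "(*) _"] sum.delta' cong: if_cong)

lemma fmul_idf_left: "fmul n idf X i j = X i j" if "i < n"
proof -
  have "(\<Sum>k<n. (if i = k then 1 else 0) * X k j) = (\<Sum>k<n. if i = k then X k j else 0)"
    by (rule sum.cong) auto
  thus ?thesis using that unfolding fmul_def idf_def by simp
qed

lemma feq_refl[simp]: "feq n X X" unfolding feq_def by auto
lemma feq_sym: "feq n X Y \<Longrightarrow> feq n Y X" unfolding feq_def by auto
lemma feq_trans: "feq n X Y \<Longrightarrow> feq n Y Z \<Longrightarrow> feq n X Z" unfolding feq_def by auto

lemma feq_fmul_idf_right: "feq n (fmul n X idf) X"
  unfolding feq_def by (simp add: fmul_idf_right)
lemma feq_fmul_idf_left: "feq n (fmul n idf X) X"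
  unfolding feq_def by (simp add: fmul_idf_left)

lemma unit_f_mult:
  assumes "unit_f n X" "unit_f n Y"
  shows "unit_f n (fmul n X Y)"
proof -
  have 1: "feq n (fmul n (fmul n X Y) (fadj (fmul n X Y))) idf"
  proof -
    have "fmul n (fmul n X Y) (fadj (fmul n X Y)) = fmul n X (fmul n (fmul n Y (fadj Y)) (fadj X))"
      by (simp add: fadj_fmul fmul_assoc)
    moreover have "feq n (fmul n X (fmul n (fmul n Y (fadj Y)) (fadj X))) (fmul n X (fmul n idf (fadj X)))"
      using assms unfolding unit_f_def by (intro fmul_cong fmul_cong) auto
    moreover have "feq n (fmul n X (fmul n idf (fadj X))) (fmul n X (fadj X))"
      by (intro fmul_cong feq_fmul_idf_left) auto
    ultimately show ?thesis using assms unfolding unit_f_def by (metis feq_trans)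
  qed
  have 2: "feq n (fmul n (fadj (fmul n X Y)) (fmul n X Y)) idf"
  proof -
    have "fmul n (fadj (fmul n X Y)) (fmul n X Y) = fmul n (fadj Y) (fmul n (fmul n (fadj X) X) Y)"
      by (simp add: fadj_fmul fmul_assoc)
    moreover have "feq n (fmul n (fadj Y) (fmul n (fmul n (fadj X) X) Y)) (fmul n (fadj Y) (fmul n idf Y))"
      using assms unfolding unit_f_def by (intro fmul_cong fmul_cong) auto
    moreover have "feq n (fmul n (fadj Y) (fmul n idf Y)) (fmul n (fadj Y) Y)"
      by (intro fmul_cong feq_fmul_idf_left) auto
    ultimately show ?thesis using assms unfolding unit_f_def by (metis feq_trans)
  qed
  show ?thesis using 1 2 unfolding unit_f_def by auto
qed

lemma cmod_sq_eq: "complex_of_real ((cmod z)^2) = z * cnj z"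
  by (rule complex_norm_square)

lemma exists_eigvec:
  fixes n :: nat and A :: "nat \<Rightarrow> nat \<Rightarrow> complex"
  assumes "n > 0"
  shows "\<exists>u e. (\<Sum>i<n. (cmod (u i))^2) = 1 \<and> (\<forall>i<n. (\<Sum>j<n. A i j * u j) = e * u i)"
proof -
  define M where "M = mat n n (\<lambda>(i,j). A i j)"
  have M: "M \<in> carrier_mat n n" unfolding M_def by auto
  from spectrum_non_empty[OF M assms] obtain e where "e \<in> spectrum M" by auto
  then have "eigenvalue M e" unfolding spectrum_def by auto
  then obtain v where ev: "eigenvector M v e" unfolding eigenvalue_def by auto
  then have v: "v \<in> carrier_vec n" and v0: "v \<noteq> 0\<^sub>v n" and Mv: "M *\<^sub>v v = e \<cdot>\<^sub>v v"
    using M unfolding eigenvector_def by auto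
  have Mvi: "(\<Sum>j<n. A i j * v $ j) = e * v $ i" if "i < n" for i
  proof -
    have "(M *\<^sub>v v) $ i = e * v $ i" using Mv that v by auto
    moreover have "(M *\<^sub>v v) $ i = (\<Sum>j<n. A i j * v $ j)"
      using that v M unfolding M_def by (auto simp: scalar_prod_def lessThan_atLeast0)
    ultimately show ?thesis by simp
  qed
  obtain k where k: "k < n" "v $ k \<noteq> 0"
  proof -
    have "\<exists>k<n. v $ k \<noteq> 0"
    proof (rule ccontr)
      assume "\<not> ?thesis"
      then have "v = 0\<^sub>v n" using v by (intro eq_vecI) auto
      with v0 show False by simp
    qed
    thus ?thesis using that by auto
  qed
  define s where "s = (\<Sum>i<n. (cmod (v $ i))^2)"
  have s_pos: "s > 0" unfolding s_def
  proof -
    have "(cmod (v $ k))^2 \<le> (\<Sum>i<n. (cmod (v $ i))^2)"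
      using k by (intro member_le_sum) auto
    moreover have "(cmod (v $ k))^2 > 0" using k by simp
    ultimately show "(\<Sum>i<n. (cmod (v $ i))^2) > 0" by linarith
  qed
  define u where "u i = v $ i / complex_of_real (sqrt s)" for i
  have "(\<Sum>i<n. (cmod (u i))^2) = (\<Sum>i<n. (cmod (v $ i))^2 / s)"
    unfolding u_def using s_pos by (intro sum.cong) (auto simp: norm_divide power_divide)
  also have "\<dots> = 1" using s_pos by (simp add: sum_divide_distrib[symmetric] s_def)
  finally have 1: "(\<Sum>i<n. (cmod (u i))^2) = 1" .
  have 2: "(\<Sum>j<n. A i j * u j) = e * u i" if "i < n" for i
  proof -
    have "(\<Sum>j<n. A i j * u j) = (\<Sum>j<n. A i j * v $ j) / complex_of_real (sqrt s)"
      unfolding u_def by (simp add: sum_divide_distrib)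
    also have "\<dots> = e * u i" using Mvi[OF that] unfolding u_def by simp
    finally show ?thesis .
  qed
  show ?thesis using 1 2 by blast
qed

lemma sum_delta_ml: "i < (m::nat) \<Longrightarrow> (\<Sum>k<m. (if i = k then 1 else 0) * f k) = (f i :: complex)"
proof -
  assume "i < m"
  have "(\<Sum>k<m. (if i = k then 1 else 0) * f k) = (\<Sum>k<m. if k = i then f k else 0)"
    by (intro sum.cong) auto
  also have "\<dots> = f i" using \<open>i < m\<close> by (simp add: sum.delta)
  finally show ?thesis .
qed

lemma sum_delta_mr: "j < (m::nat) \<Longrightarrow> (\<Sum>k<m. f k * (if k = j then 1 else 0)) = (f j :: complex)"
proof -
  assume "j < m"
  have "(\<Sum>k<m. f k * (if k = j then 1 else 0)) = (\<Sum>k<m. if k = j then f k else 0)"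
    by (intro sum.cong) auto
  also have "\<dots> = f j" using \<open>j < m\<close> by (simp add: sum.delta)
  finally show ?thesis .
qed

lemma householder:
  assumes m: "m > 0" and u: "(\<Sum>i<m. (cmod (u i))^2) = 1"
  shows "\<exists>Hm c. unit_f m Hm \<and> (\<forall>i<m. Hm i 0 = c * u i)"
proof -
  define c where "c = (if u 0 = 0 then 1 else cnj (u 0) / complex_of_real (cmod (u 0)))"
  have cu0: "c * u 0 = complex_of_real (cmod (u 0))"
  proof (cases "u 0 = 0")
    case False
    have "c * u 0 = (u 0 * cnj (u 0)) / complex_of_real (cmod (u 0))"
      unfolding c_def using False by (simp add: mult.commute)
    also have "\<dots> = complex_of_real ((cmod (u 0))^2) / complex_of_real (cmod (u 0))"
      by (simp only: cmod_sq_eq)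
    also have "\<dots> = complex_of_real (cmod (u 0))" using False by (simp add: power2_eq_square)
    finally show ?thesis .
  qed (simp add: c_def)
  have cc: "c * cnj c = 1"
  proof (cases "u 0 = 0")
    case False
    have "c * cnj c = (u 0 * cnj (u 0)) / (complex_of_real (cmod (u 0)))^2"
      unfolding c_def using False by (simp add: power2_eq_square mult.commute)
    also have "\<dots> = 1" using False by (simp add: cmod_sq_eq[symmetric])
    finally show ?thesis .
  qed (simp add: c_def)
  define w where "w i = (if i = 0 then 1 else 0) - c * u i" for i
  define nw where "nw = (\<Sum>k<m. w k * cnj (w k))"
  have uu: "(\<Sum>k<m. u k * cnj (u k)) = 1"
  proof -
    have "(\<Sum>k<m. u k * cnj (u k)) = complex_of_real (\<Sum>i<m. (cmod (u i))^2)"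
      unfolding of_real_sum by (simp only: cmod_sq_eq)
    thus ?thesis using u by simp
  qed
  have w0: "w 0 = complex_of_real (1 - cmod (u 0))" unfolding w_def using cu0 by simp
  have nw2: "nw = 2 * w 0"
  proof -
    have "nw = (\<Sum>k<m. (if k = 0 then 1 else 0) - (if k = 0 then cnj (c * u k) else 0)
          - (if k = 0 then c * u k else 0) + (c * cnj c) * (u k * cnj (u k)))"
      unfolding nw_def w_def by (intro sum.cong) (auto simp: algebra_simps)
    also have "\<dots> = 1 - cnj (c * u 0) - c * u 0 + 1"
      using m by (simp add: sum.distrib sum_subtractf cc uu)
    also have "\<dots> = 2 * w 0" unfolding w0 cu0 by simp
    finally show ?thesis .
  qed
  have nw_real: "cnj nw = nw" unfolding nw2 w0 by simp
  define Hm where "Hm i j = (if i = j then 1 else 0) - 2 * w i * cnj (w j) / nw" for i j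
  have herm: "fadj Hm = Hm" unfolding fadj_def Hm_def
    by (intro ext) (simp add: nw_real)
  have sq: "feq m (fmul m Hm Hm) idf"
    unfolding feq_def
  proof (intro allI impI)
    fix i j assume ij: "i < m" "j < m"
    have "fmul m Hm Hm i j = (\<Sum>k<m. (if i = k then 1 else 0) * (if k = j then 1 else 0)
        - (if i = k then 1 else 0) * (2 * w k * cnj (w j) / nw)
        - (2 * w i * cnj (w k) / nw) * (if k = j then 1 else 0)
        + 4 * w i * cnj (w j) / (nw * nw) * (w k * cnj (w k)))"
      unfolding fmul_def Hm_def
    proof (intro sum.cong refl)
      fix k
      have e: "(A - B) * (C - D) = A*C - A*D - B*C + B*D" for A B C D :: complex by (simp add: algebra_simps)
      have "2 * w i * cnj (w k) / nw * (2 * w k * cnj (w j) / nw) = 4 * w i * cnj (w j) / (nw * nw) * (w k * cnj (w k))"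
        by (simp add: field_simps)
      thus "((if i = k then 1 else 0) - 2 * w i * cnj (w k) / nw) * ((if k = j then 1 else 0) - 2 * w k * cnj (w j) / nw) =
         (if i = k then 1 else 0) * (if k = j then 1 else 0) - (if i = k then 1 else 0) * (2 * w k * cnj (w j) / nw) -
         2 * w i * cnj (w k) / nw * (if k = j then 1 else 0) + 4 * w i * cnj (w j) / (nw * nw) * (w k * cnj (w k))"
        by (simp only: e)
    qed
    also have "\<dots> = (\<Sum>k<m. (if i = k then 1 else 0) * (if k = j then 1 else 0))
        - (\<Sum>k<m. (if i = k then 1 else 0) * (2 * w k * cnj (w j) / nw))
        - (\<Sum>k<m. (2 * w i * cnj (w k) / nw) * (if k = j then 1 else 0))
        + (\<Sum>k<m. 4 * w i * cnj (w j) / (nw * nw) * (w k * cnj (w k)))"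
      by (simp only: sum.distrib sum_subtractf)
    also have "(\<Sum>k<m. (if i = k then 1 else 0) * (if k = j then 1 else (0::complex))) = (if i = j then 1 else 0)"
    proof -
      have "(\<Sum>k<m. (if i = k then 1 else 0) * (if k = j then 1 else (0::complex))) = (\<Sum>k<m. if k = i then (if i = j then 1 else 0) else 0)"
        by (intro sum.cong) auto
      thus ?thesis using ij by simp
    qed
    also have "(\<Sum>k<m. (if i = k then 1 else 0) * (2 * w k * cnj (w j) / nw)) = 2 * w i * cnj (w j) / nw"
      by (rule sum_delta_ml[OF ij(1)])
    also have "(\<Sum>k<m. (2 * w i * cnj (w k) / nw) * (if k = j then 1 else 0)) = 2 * w i * cnj (w j) / nw"
      by (rule sum_delta_mr[OF ij(2)])
    also have "(\<Sum>k<m. 4 * w i * cnj (w j) / (nw * nw) * (w k * cnj (w k))) = 4 * w i * cnj (w j) / (nw * nw) * nw"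
      by (simp only: sum_distrib_left[symmetric] nw_def)
    finally have "fmul m Hm Hm i j = (if i = j then 1 else 0) - 2 * w i * cnj (w j) / nw - 2 * w i * cnj (w j) / nw
       + 4 * w i * cnj (w j) / (nw * nw) * nw" .
    also have "\<dots> = idf i j"
      unfolding idf_def by (cases "nw = 0") (auto simp: field_simps)
    finally show "fmul m Hm Hm i j = idf i j" .
  qed
  have col: "Hm i 0 = c * u i" if "i < m" for i
  proof (cases "nw = 0")
    case True
    then have "w 0 = 0" using nw2 by simp
    have "w k * cnj (w k) = 0" if "k < m" for k
    proof -
      have "(\<Sum>k<m. (cmod (w k))^2) = 0" using True unfolding nw_def
        by (metis (no_types, lifting) cmod_sq_eq of_real_eq_0_iff of_real_sum sum.cong)
      then have "(cmod (w k))^2 = 0" using that by (subst (asm) sum_nonneg_eq_0_iff) auto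
      thus ?thesis by (simp add: complex_mult_cnj[symmetric] cmod_sq_eq[symmetric])
    qed
    then have "w i = 0" using \<open>i < m\<close> by (metis complex_cnj_zero_iff mult_eq_0_iff)
    thus ?thesis unfolding Hm_def using True w_def by (auto simp: w_def)
  next
    case False
    have "Hm i 0 = (if i = 0 then 1 else 0) - w i * (2 * cnj (w 0) / nw)"
      unfolding Hm_def by (simp add: algebra_simps)
    also have "2 * cnj (w 0) / nw = 1" using False nw2 w0 by simp
    finally show ?thesis unfolding w_def by simp
  qed
  have "unit_f m Hm" unfolding unit_f_def herm using sq by simp
  thus ?thesis using col by blast
qed

definition fdiag :: "(nat \<Rightarrow> real) \<Rightarrow> nat \<Rightarrow> nat \<Rightarrow> complex" where
  "fdiag lam = (\<lambda>i j. if i = j then complex_of_real (lam i) else 0)"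

lemma fmul_fdiag: "fmul n (fmul n U (fdiag lam)) (fadj U) i j = (\<Sum>k<n. U i k * complex_of_real (lam k) * cnj (U j k))"
proof -
  have "fmul n U (fdiag lam) i k = (if k < n then U i k * complex_of_real (lam k) else 0)" for i k
    unfolding fmul_def fdiag_def by (auto simp: if_distrib[of "\<lambda>x. _ * x"] cong: if_cong)
  thus ?thesis unfolding fmul_def fadj_def by (intro sum.cong) auto
qed

lemma feq_adj: "feq n X Y \<Longrightarrow> feq n (fadj X) (fadj Y)"
  unfolding feq_def fadj_def by auto

lemma herm_eig_col0:
  assumes Hm: "unit_f m Hm" and col: "\<forall>i<m. Hm i 0 = c * u i"
    and eig: "\<forall>i<m. (\<Sum>j<m. A i j * u j) = e * u i" and m: "m > 0"
  shows "i < m \<Longrightarrow> fmul m (fadj Hm) (fmul m A Hm) i 0 = (if i = 0 then e else 0)"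
proof -
  assume i: "i < m"
  have "fmul m A Hm k 0 = c * e * u k" if "k < m" for k
  proof -
    have "fmul m A Hm k 0 = (\<Sum>l<m. A k l * (c * u l))"
      unfolding fmul_def using col by (intro sum.cong) auto
    also have "\<dots> = c * (\<Sum>l<m. A k l * u l)" by (simp add: sum_distrib_left algebra_simps)
    also have "\<dots> = c * e * u k" using eig that by simp
    finally show ?thesis .
  qed
  then have "fmul m (fadj Hm) (fmul m A Hm) i 0 = (\<Sum>k<m. fadj Hm i k * (e * Hm k 0))"
    unfolding fmul_def using col by (intro sum.cong) (auto simp: algebra_simps)
  also have "\<dots> = e * fmul m (fadj Hm) Hm i 0"
    unfolding fmul_def by (simp add: sum_distrib_left algebra_simps)
  also have "fmul m (fadj Hm) Hm i 0 = idf i 0" using Hm i m unfolding unit_f_def feq_def by auto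
  finally show ?thesis unfolding idf_def by auto
qed

theorem spectral_f:
  "herm n A \<Longrightarrow> \<exists>U lam. unit_f n U \<and> feq n A (fmul n (fmul n U (fdiag lam)) (fadj U))"
proof (induction n arbitrary: A)
  case 0
  then show ?case unfolding unit_f_def feq_def by auto
next
  case (Suc n)
  define m where "m = Suc n"
  have m: "m > 0" unfolding m_def by simp
  have hA: "herm m A" using Suc.prems unfolding m_def .
  obtain u e where u: "(\<Sum>i<m. (cmod (u i))^2) = 1" and eig: "\<forall>i<m. (\<Sum>j<m. A i j * u j) = e * u i"
    using exists_eigvec[OF m, of A] by blast
  obtain Hm c where Hm: "unit_f m Hm" and col: "\<forall>i<m. Hm i 0 = c * u i"
    using householder[OF m u] by blast
  define A' where "A' = fmul m (fadj Hm) (fmul m A Hm)"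
  have c0: "A' i 0 = (if i = 0 then e else 0)" if "i < m" for i
    unfolding A'_def using herm_eig_col0[OF Hm col eig m that] .
  have hA': "feq m (fadj A') A'"
  proof -
    have "fadj A' = fmul m (fmul m (fadj Hm) (fadj A)) Hm"
      unfolding A'_def by (simp add: fadj_fmul)
    moreover have "feq m (fmul m (fmul m (fadj Hm) (fadj A)) Hm) (fmul m (fmul m (fadj Hm) A) Hm)"
      using hA unfolding herm_def by (intro fmul_cong) auto
    moreover have "fmul m (fmul m (fadj Hm) A) Hm = A'" unfolding A'_def by (simp add: fmul_assoc)
    ultimately show ?thesis by simp
  qed
  have r0: "A' 0 j = (if j = 0 then cnj e else 0)" if "j < m" for j
  proof -
    have "A' 0 j = cnj (A' j 0)" using hA' that m unfolding feq_def fadj_def by auto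
    thus ?thesis using c0[OF that] by auto
  qed
  have ereal: "cnj e = e" using r0[OF m] c0[OF m] by simp
  then have e_eq: "e = complex_of_real (Re e)" by (simp add: complex_eq_iff)
  define B where "B i j = A' (Suc i) (Suc j)" for i j
  have hB: "herm n B" using hA' unfolding herm_def feq_def B_def fadj_def m_def by auto
  obtain U' lam' where U': "unit_f n U'" and dec': "feq n B (fmul n (fmul n U' (fdiag lam')) (fadj U'))"
    using Suc.IH[OF hB] by blast
  define Ub where "Ub i j = (if i = 0 \<and> j = 0 then 1 else if i = 0 \<or> j = 0 then 0 else U' (i - 1) (j - 1))" for i j
  define lam where "lam k = (if k = 0 then Re e else lam' (k - 1))" for k
  have Ub: "unit_f m Ub"
  proof -
    have 1: "fmul m Ub (fadj Ub) i j = idf i j" if "i < m" "j < m" for i j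
    proof -
      have "fmul m Ub (fadj Ub) i j = Ub i 0 * cnj (Ub j 0) + (\<Sum>k<n. Ub i (Suc k) * cnj (Ub j (Suc k)))"
        unfolding fmul_def fadj_def m_def sum.lessThan_Suc_shift by simp
      also have "\<dots> = idf i j"
      proof (cases "i = 0 \<or> j = 0")
        case True
        then show ?thesis unfolding Ub_def idf_def by auto
      next
        case False
        then obtain i' j' where ij: "i = Suc i'" "j = Suc j'" by (metis not0_implies_Suc)
        then have "i' < n" "j' < n" using that m_def by auto
        then have "(\<Sum>k<n. U' i' k * cnj (U' j' k)) = idf i' j'"
          using U' unfolding unit_f_def feq_def fmul_def fadj_def by auto
        thus ?thesis unfolding Ub_def idf_def ij by auto
      qed
      finally show ?thesis .
    qed
    have 2: "fmul m (fadj Ub) Ub i j = idf i j" if "i < m" "j < m" for i j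
    proof -
      have "fmul m (fadj Ub) Ub i j = cnj (Ub 0 i) * Ub 0 j + (\<Sum>k<n. cnj (Ub (Suc k) i) * Ub (Suc k) j)"
        unfolding fmul_def fadj_def m_def sum.lessThan_Suc_shift by simp
      also have "\<dots> = idf i j"
      proof (cases "i = 0 \<or> j = 0")
        case True
        then show ?thesis unfolding Ub_def idf_def by auto
      next
        case False
        then obtain i' j' where ij: "i = Suc i'" "j = Suc j'" by (metis not0_implies_Suc)
        then have "i' < n" "j' < n" using that m_def by auto
        then have "(\<Sum>k<n. cnj (U' k i') * U' k j') = idf i' j'"
          using U' unfolding unit_f_def feq_def fmul_def fadj_def by auto
        thus ?thesis unfolding Ub_def idf_def ij by auto
      qed
      finally show ?thesis .
    qed
    show ?thesis unfolding unit_f_def feq_def using 1 2 by auto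
  qed
  have decA': "feq m A' (fmul m (fmul m Ub (fdiag lam)) (fadj Ub))"
    unfolding feq_def
  proof (intro allI impI)
    fix i j assume ij: "i < m" "j < m"
    have "fmul m (fmul m Ub (fdiag lam)) (fadj Ub) i j = (\<Sum>k<m. Ub i k * complex_of_real (lam k) * cnj (Ub j k))"
      by (rule fmul_fdiag)
    also have "\<dots> = Ub i 0 * complex_of_real (lam 0) * cnj (Ub j 0) + (\<Sum>k<n. Ub i (Suc k) * complex_of_real (lam (Suc k)) * cnj (Ub j (Suc k)))"
      unfolding m_def sum.lessThan_Suc_shift by simp
    also have "\<dots> = A' i j"
    proof (cases "i = 0 \<or> j = 0")
      case True
      then show ?thesis using c0 r0 ij e_eq ereal unfolding Ub_def lam_def by auto
    next
      case False
      then obtain i' j' where ij': "i = Suc i'" "j = Suc j'" by (metis not0_implies_Suc)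
      then have "i' < n" "j' < n" using ij m_def by auto
      then have "B i' j' = (\<Sum>k<n. U' i' k * complex_of_real (lam' k) * cnj (U' j' k))"
        using dec' unfolding feq_def fmul_fdiag by blast
      thus ?thesis unfolding Ub_def lam_def ij' B_def by simp
    qed
    finally show "A' i j = fmul m (fmul m Ub (fdiag lam)) (fadj Ub) i j" by simp
  qed
  define U where "U = fmul m Hm Ub"
  have U: "unit_f m U" unfolding U_def using unit_f_mult[OF Hm Ub] .
  have "feq m A (fmul m (fmul m Hm A') (fadj Hm))"
  proof -
    have "fmul m (fmul m Hm A') (fadj Hm) = fmul m (fmul m Hm (fadj Hm)) (fmul m A (fmul m Hm (fadj Hm)))"
      unfolding A'_def by (simp add: fmul_assoc)
    moreover have "feq m (fmul m (fmul m Hm (fadj Hm)) (fmul m A (fmul m Hm (fadj Hm)))) (fmul m idf (fmul m A idf))"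
      using Hm unfolding unit_f_def by (intro fmul_cong) auto
    moreover have "feq m (fmul m idf (fmul m A idf)) A"
      using feq_fmul_idf_left[of m "fmul m A idf"] feq_fmul_idf_right[of m A] by (rule feq_trans)
    ultimately show ?thesis using feq_sym feq_trans by metis
  qed
  moreover have "feq m (fmul m (fmul m Hm A') (fadj Hm)) (fmul m (fmul m Hm (fmul m (fmul m Ub (fdiag lam)) (fadj Ub))) (fadj Hm))"
    using decA' by (intro fmul_cong) auto
  moreover have "fmul m (fmul m Hm (fmul m (fmul m Ub (fdiag lam)) (fadj Ub))) (fadj Hm) = fmul m (fmul m U (fdiag lam)) (fadj U)"
    unfolding U_def by (simp add: fmul_assoc fadj_fmul)
  ultimately have "feq m A (fmul m (fmul m U (fdiag lam)) (fadj U))" using feq_trans by metis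
  thus ?case using U unfolding m_def by blast
qed

theorem spectral:
  assumes "herm n A"
  shows "\<exists>U lam. unit_f n U \<and> (\<forall>i<n. \<forall>j<n. A i j = (\<Sum>k<n. U i k * complex_of_real (lam k) * cnj (U j k)))"
  using spectral_f[OF assms] unfolding feq_def fmul_fdiag by blast

lemma order_prod_linear:
  "order e (\<Prod>a\<leftarrow>map f xs. [:- a, 1:]) = length (filter (\<lambda>x. f x = e) xs)"
proof (induction xs)
  case Nil
  then show ?case by (simp add: order_0I)
next
  case (Cons x xs)
  have nz: "(\<Prod>a\<leftarrow>map f xs. [:- a, 1:]) \<noteq> 0"
    by (auto simp: prod_list_zero_iff)
  have eq: "(\<Prod>a\<leftarrow>map f (x # xs). [:- a, 1:]) = [:- f x, 1:] * (\<Prod>a\<leftarrow>map f xs. [:- a, 1:])"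
    by simp
  have nz2: "[:- f x, 1:] * (\<Prod>a\<leftarrow>map f xs. [:- a, 1:]) \<noteq> 0"
    using nz by (simp only: mult_eq_0_iff) auto
  have "order e (\<Prod>a\<leftarrow>map f (x # xs). [:- a, 1:]) = order e [:- f x, 1:] + order e (\<Prod>a\<leftarrow>map f xs. [:- a, 1:])"
    unfolding eq by (rule order_mult[OF nz2])
  then show ?case using Cons by (auto simp: order_linear')
qed

lemma entropy_decomp:
  fixes M :: "complex mat"
  assumes M: "M \<in> carrier_mat n n" and U: "unit_f n U"
    and dec: "\<forall>i<n. \<forall>j<n. M $$ (i,j) = (\<Sum>k<n. U i k * complex_of_real (lam k) * cnj (U j k))"
  shows "vn_entropy M = - (\<Sum>k<n. xlogx (lam k))"
proof -
  define Um where "Um = mat n n (\<lambda>(i,j). U i j)"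
  define Uh where "Uh = mat n n (\<lambda>(i,j). cnj (U j i))"
  define D where "D = mat n n (\<lambda>(i,j). if i = j then complex_of_real (lam i) else 0)"
  have UmUh: "Um * Uh = 1\<^sub>m n"
  proof (rule eq_matI)
    fix i j assume ij: "i < dim_row (1\<^sub>m n)" "j < dim_col (1\<^sub>m n)"
    then have "(Um * Uh) $$ (i,j) = fmul n U (fadj U) i j"
      unfolding Um_def Uh_def fmul_def fadj_def
      by (auto simp: scalar_prod_def lessThan_atLeast0 intro!: sum.cong)
    also have "\<dots> = idf i j" using U ij unfolding unit_f_def feq_def by auto
    finally show "(Um * Uh) $$ (i,j) = 1\<^sub>m n $$ (i,j)" using ij unfolding idf_def by auto
  qed (auto simp: Um_def Uh_def)
  have UhUm: "Uh * Um = 1\<^sub>m n"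
  proof (rule eq_matI)
    fix i j assume ij: "i < dim_row (1\<^sub>m n)" "j < dim_col (1\<^sub>m n)"
    then have "(Uh * Um) $$ (i,j) = fmul n (fadj U) U i j"
      unfolding Um_def Uh_def fmul_def fadj_def
      by (auto simp: scalar_prod_def lessThan_atLeast0 intro!: sum.cong)
    also have "\<dots> = idf i j" using U ij unfolding unit_f_def feq_def by auto
    finally show "(Uh * Um) $$ (i,j) = 1\<^sub>m n $$ (i,j)" using ij unfolding idf_def by auto
  qed (auto simp: Um_def Uh_def)
  have MD: "M = Um * D * Uh"
  proof (rule eq_matI)
    fix i j assume ij: "i < dim_row (Um * D * Uh)" "j < dim_col (Um * D * Uh)"
    then have ij': "i < n" "j < n" by (auto simp: Um_def Uh_def)
    have UD: "(Um * D) $$ (i,k) = U i k * complex_of_real (lam k)" if "k < n" for k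
    proof -
      have "(Um * D) $$ (i,k) = (\<Sum>l<n. U i l * (if l = k then complex_of_real (lam l) else 0))"
        using ij' that unfolding Um_def D_def by (auto simp: scalar_prod_def lessThan_atLeast0 intro!: sum.cong)
      also have "\<dots> = (\<Sum>l<n. if l = k then U i l * complex_of_real (lam l) else 0)"
        by (intro sum.cong) auto
      also have "\<dots> = U i k * complex_of_real (lam k)" using that by simp
      finally show ?thesis .
    qed
    have "(Um * D * Uh) $$ (i,j) = (\<Sum>k<n. (Um * D) $$ (i,k) * cnj (U j k))"
      using ij' unfolding Uh_def by (auto simp: scalar_prod_def lessThan_atLeast0 Um_def D_def intro!: sum.cong)
    also have "\<dots> = (\<Sum>k<n. U i k * complex_of_real (lam k) * cnj (U j k))"
      using UD by (intro sum.cong) auto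
    finally show "M $$ (i,j) = (Um * D * Uh) $$ (i,j)" using dec ij' by simp
  qed (use M in \<open>auto simp: Um_def Uh_def\<close>)
  have sim: "similar_mat M D"
    by (rule similar_matI[of M D Um Uh n]) (use M UmUh UhUm MD in \<open>auto simp: Um_def Uh_def D_def\<close>)
  have Dc: "D \<in> carrier_mat n n" unfolding D_def by auto
  have ut: "upper_triangular D" unfolding upper_triangular_def D_def by auto
  have dg: "diag_mat D = map (\<lambda>i. complex_of_real (lam i)) [0..<n]"
    unfolding diag_mat_def D_def by (auto intro!: map_cong)
  have cp: "char_poly M = (\<Prod>a\<leftarrow>map (\<lambda>i. complex_of_real (lam i)) [0..<n]. [:- a, 1:])"
    unfolding char_poly_similar[OF sim] char_poly_upper_triangular[OF Dc ut] dg ..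
  have nz: "(\<Prod>a\<leftarrow>map (\<lambda>i. complex_of_real (lam i)) [0..<n]. [:- a, 1:]) \<noteq> 0"
    by (auto simp: prod_list_zero_iff)
  have spec: "spectrum M = (\<lambda>i. complex_of_real (lam i)) ` {..<n}"
  proof -
    have "spectrum M = {k. poly (char_poly M) k = 0}" by (rule spectrum_root_char_poly[OF M])
    also have "\<dots> = {k. order k (char_poly M) \<noteq> 0}"
      using nz cp by (auto simp: order_root)
    also have "\<dots> = (\<lambda>i. complex_of_real (lam i)) ` {..<n}"
      unfolding cp order_prod_linear by (auto simp: filter_empty_conv)
    finally show ?thesis .
  qed
  have ord: "order e (char_poly M) = card {i\<in>{..<n}. complex_of_real (lam i) = e}" for e
  proof -
    have "order e (char_poly M) = length (filter (\<lambda>x. complex_of_real (lam x) = e) [0..<n])"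
      unfolding cp by (rule order_prod_linear)
    also have "\<dots> = card {i\<in>{..<n}. complex_of_real (lam i) = e}"
      by (subst distinct_length_filter) (auto intro!: arg_cong[where f = card])
    finally show ?thesis .
  qed
  have "(\<Sum>k<n. xlogx (lam k)) = (\<Sum>y\<in>(\<lambda>i. complex_of_real (lam i)) ` {..<n}. \<Sum>k\<in>{x. x \<in> {..<n} \<and> complex_of_real (lam x) = y}. xlogx (lam k))"
    by (rule sum.image_gen) simp
  also have "\<dots> = (\<Sum>y\<in>(\<lambda>i. complex_of_real (lam i)) ` {..<n}. real (card {i\<in>{..<n}. complex_of_real (lam i) = y}) * xlogx (Re y))"
  proof (intro sum.cong refl)
    fix y assume "y \<in> (\<lambda>i. complex_of_real (lam i)) ` {..<n}"
    have "(\<Sum>k\<in>{x. x \<in> {..<n} \<and> complex_of_real (lam x) = y}. xlogx (lam k)) = (\<Sum>k\<in>{x. x \<in> {..<n} \<and> complex_of_real (lam x) = y}. xlogx (Re y))"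
      by (intro sum.cong) auto
    thus "(\<Sum>k\<in>{x. x \<in> {..<n} \<and> complex_of_real (lam x) = y}. xlogx (lam k)) = real (card {i\<in>{..<n}. complex_of_real (lam i) = y}) * xlogx (Re y)"
      by simp
  qed
  finally show ?thesis unfolding vn_entropy_def spec ord by simp
qed

lemma mr_repr:
  fixes L :: nat and r :: "nat \<Rightarrow> nat"
  shows "(x::nat) mod (\<Prod>u<L. r u) = (\<Sum>t<L. ((x div (\<Prod>u<t. r u)) mod r t) * (\<Prod>u<t. r u))"
proof (induction L)
  case 0
  then show ?case by simp
next
  case (Suc L)
  have "x mod (\<Prod>u<Suc L. r u) = x mod ((\<Prod>u<L. r u) * r L)" by (simp add: mult.commute)
  also have "\<dots> = (\<Prod>u<L. r u) * (x div (\<Prod>u<L. r u) mod r L) + x mod (\<Prod>u<L. r u)"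
    by (rule mod_mult2_eq)
  finally show ?case using Suc by (simp add: mult.commute)
qed

lemma mr_bij:
  fixes L :: nat and r :: "nat \<Rightarrow> nat"
  assumes r: "\<forall>t<L. r t > 0"
  shows "bij_betw (\<lambda>x. restrict (\<lambda>t. (x div (\<Prod>u<t. r u)) mod r t) {..<L}) {..<(\<Prod>u<L. r u)} (PiE {..<L} (\<lambda>t. {..<r t}))"
proof -
  let ?f = "\<lambda>x. restrict (\<lambda>t. (x div (\<Prod>u<t. r u)) mod r t) {..<L}"
  have inj: "inj_on ?f {..<(\<Prod>u<L. r u)}"
  proof (rule inj_onI)
    fix x y assume x: "x \<in> {..<(\<Prod>u<L. r u)}" and y: "y \<in> {..<(\<Prod>u<L. r u)}" and eq: "?f x = ?f y"
    have "\<forall>t<L. (x div (\<Prod>u<t. r u)) mod r t = (y div (\<Prod>u<t. r u)) mod r t"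
    proof (intro allI impI)
      fix t assume "t < L"
      then show "(x div (\<Prod>u<t. r u)) mod r t = (y div (\<Prod>u<t. r u)) mod r t"
        using fun_cong[OF eq, of t] by simp
    qed
    then have "x mod (\<Prod>u<L. r u) = y mod (\<Prod>u<L. r u)"
      unfolding mr_repr by (intro sum.cong) auto
    thus "x = y" using x y by simp
  qed
  have sub: "?f ` {..<(\<Prod>u<L. r u)} \<subseteq> PiE {..<L} (\<lambda>t. {..<r t})"
  proof (intro image_subsetI PiE_I)
    fix x t assume "t \<in> {..<L}"
    then show "?f x t \<in> {..<r t}" using r by simp
  next
    fix x t assume "t \<notin> {..<L}"
    then show "?f x t = undefined" by simp
  qed
  have card: "card (PiE {..<L} (\<lambda>t. {..<r t})) = card {..<(\<Prod>u<L. r u)}"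
    by (simp add: card_PiE)
  have "?f ` {..<(\<Prod>u<L. r u)} = PiE {..<L} (\<lambda>t. {..<r t})"
    by (rule card_subset_eq) (use sub card inj in \<open>auto simp: card_image finite_PiE\<close>)
  thus ?thesis using inj unfolding bij_betw_def by auto
qed

definition Fs :: "nat \<Rightarrow> (nat \<Rightarrow> nat) \<Rightarrow> (nat \<Rightarrow> nat) set" where
  "Fs N d = PiE {..<N} (\<lambda>k. {..<d k})"

definition Dn :: "nat \<Rightarrow> (nat \<Rightarrow> nat) \<Rightarrow> nat" where
  "Dn N d = tdim d (sites N)"

definition dig :: "nat \<Rightarrow> (nat \<Rightarrow> nat) \<Rightarrow> nat \<Rightarrow> nat \<Rightarrow> nat" where
  "dig N d n = restrict (\<lambda>k. ldigit d (sites N) k n) {..<N}"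

definition enc :: "nat \<Rightarrow> (nat \<Rightarrow> nat) \<Rightarrow> (nat \<Rightarrow> nat) \<Rightarrow> nat" where
  "enc N d f = inv_into {..<Dn N d} (dig N d) f"

lemma Dn_eq: "Dn N d = (\<Prod>u<N. d u)"
  unfolding Dn_def tdim_def sites_def by simp

lemma ldigit_sites: "k < N \<Longrightarrow> ldigit d (sites N) k n = (n div (\<Prod>u<k. d u)) mod d k"
  unfolding ldigit_def sites_def by simp

lemma bij_dig:
  assumes d: "\<forall>k<N. d k \<ge> 1"
  shows "bij_betw (dig N d) {..<Dn N d} (Fs N d)"
proof -
  have "dig N d = (\<lambda>x. restrict (\<lambda>t. (x div (\<Prod>u<t. d u)) mod d t) {..<N})"
    unfolding dig_def by (intro ext) (auto simp: ldigit_sites)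
  moreover have "\<forall>t<N. 0 < d t" using d by auto
  ultimately show ?thesis unfolding Dn_eq Fs_def using mr_bij[of N d] by simp
qed

lemma enc_props:
  assumes d: "\<forall>k<N. d k \<ge> 1"
  shows "f \<in> Fs N d \<Longrightarrow> enc N d f < Dn N d"
    and "f \<in> Fs N d \<Longrightarrow> dig N d (enc N d f) = f"
    and "n < Dn N d \<Longrightarrow> enc N d (dig N d n) = n"
    and "n < Dn N d \<Longrightarrow> dig N d n \<in> Fs N d"
    and "f \<in> Fs N d \<Longrightarrow> k < N \<Longrightarrow> ldigit d (sites N) k (enc N d f) = f k"
proof -
  note b = bij_dig[OF d]
  show 1: "f \<in> Fs N d \<Longrightarrow> enc N d f < Dn N d"
    unfolding enc_def using b by (metis bij_betw_def inv_into_into lessThan_iff)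
  show 2: "f \<in> Fs N d \<Longrightarrow> dig N d (enc N d f) = f"
    unfolding enc_def using b by (simp add: bij_betw_def f_inv_into_f)
  show "n < Dn N d \<Longrightarrow> enc N d (dig N d n) = n"
    unfolding enc_def using b by (simp add: bij_betw_def inv_into_f_f)
  show "n < Dn N d \<Longrightarrow> dig N d n \<in> Fs N d"
    using b by (auto simp: bij_betw_def)
  show "f \<in> Fs N d \<Longrightarrow> k < N \<Longrightarrow> ldigit d (sites N) k (enc N d f) = f k"
  proof -
    assume f: "f \<in> Fs N d" and k: "k < N"
    have "dig N d (enc N d f) k = f k" using 2[OF f] by simp
    thus ?thesis using k unfolding dig_def by simp
  qed
qed

definition ext :: "nat set \<Rightarrow> (nat \<Rightarrow> nat) \<Rightarrow> (nat \<Rightarrow> nat) \<Rightarrow> nat \<Rightarrow> nat" where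
  "ext T h a = (\<lambda>k. if k \<in> T then a k else h k)"

definition FT :: "nat \<Rightarrow> (nat \<Rightarrow> nat) \<Rightarrow> nat set \<Rightarrow> (nat \<Rightarrow> nat) set" where
  "FT N d T = {h \<in> Fs N d. \<forall>k\<in>T. h k = 0}"

definition AT :: "(nat \<Rightarrow> nat) \<Rightarrow> nat set \<Rightarrow> (nat \<Rightarrow> nat) set" where
  "AT d T = PiE T (\<lambda>k. {..<d k})"

definition G :: "nat \<Rightarrow> (nat \<Rightarrow> nat) \<Rightarrow> nat set \<Rightarrow> ((nat \<Rightarrow> nat) \<Rightarrow> complex) \<Rightarrow> (nat \<Rightarrow> nat) \<Rightarrow> (nat \<Rightarrow> nat) \<Rightarrow> complex" where
  "G N d T W a b = (\<Sum>h\<in>FT N d T. W (ext T h a) * cnj (W (ext T h b)))"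

lemma ext_in_Fs:
  assumes "T \<subseteq> {..<N}" "h \<in> Fs N d" "a \<in> AT d T"
  shows "ext T h a \<in> Fs N d"
  using assms unfolding ext_def Fs_def AT_def PiE_def Pi_def extensional_def by auto

lemma ext_inj:
  assumes "T \<subseteq> {..<N}" "h \<in> FT N d T" "h' \<in> FT N d T" "ext T h a = ext T h' a"
  shows "h = h'"
proof
  fix k
  show "h k = h' k"
  proof (cases "k \<in> T")
    case True
    then show ?thesis using assms(2,3) unfolding FT_def by auto
  next
    case False
    then show ?thesis using fun_cong[OF assms(4), of k] unfolding ext_def by auto
  qed
qed

lemma bridge:
  assumes d: "\<forall>k<N. d k \<ge> 1" and T: "T \<subseteq> {..<N}" and a: "a \<in> AT d T" and b: "b \<in> AT d T"
  shows "(\<Sum>(n, m)\<in>{(n, m). n < Dn N d \<and> m < Dn N d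
        \<and> (\<forall>k<N. k \<notin> T \<longrightarrow> ldigit d (sites N) k n = ldigit d (sites N) k m)
        \<and> (\<forall>k\<in>T. ldigit d (sites N) k n = a k \<and> ldigit d (sites N) k m = b k)}. V n * cnj (V m))
     = G N d T (\<lambda>f. V (enc N d f)) a b"
proof -
  define P where "P = {(n, m). n < Dn N d \<and> m < Dn N d
        \<and> (\<forall>k<N. k \<notin> T \<longrightarrow> ldigit d (sites N) k n = ldigit d (sites N) k m)
        \<and> (\<forall>k\<in>T. ldigit d (sites N) k n = a k \<and> ldigit d (sites N) k m = b k)}"
  define g where "g h = (enc N d (ext T h a), enc N d (ext T h b))" for h
  note ep = enc_props[OF d]
  have FTs: "h \<in> Fs N d" if "h \<in> FT N d T" for h using that unfolding FT_def by auto
  have bij: "bij_betw g (FT N d T) P"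
  proof (rule bij_betw_imageI)
    show "inj_on g (FT N d T)"
    proof (rule inj_onI)
      fix h h' assume h: "h \<in> FT N d T" and h': "h' \<in> FT N d T" and eq: "g h = g h'"
      have "dig N d (enc N d (ext T h a)) = dig N d (enc N d (ext T h' a))" using eq unfolding g_def by simp
      then have "ext T h a = ext T h' a"
        using ep(2)[OF ext_in_Fs[OF T FTs[OF h] a]] ep(2)[OF ext_in_Fs[OF T FTs[OF h'] a]] by simp
      thus "h = h'" using ext_inj[OF T h h'] by simp
    qed
    show "g ` FT N d T = P"
    proof
      show "g ` FT N d T \<subseteq> P"
      proof
        fix x assume "x \<in> g ` FT N d T"
        then obtain h where h: "h \<in> FT N d T" and x: "x = g h" by auto
        have ea: "ext T h a \<in> Fs N d" and eb: "ext T h b \<in> Fs N d" using ext_in_Fs[OF T FTs[OF h]] a b by auto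
        show "x \<in> P" unfolding x g_def P_def
          using ep(1)[OF ea] ep(1)[OF eb] ep(5)[OF ea] ep(5)[OF eb] T by (auto simp: ext_def)
      qed
      show "P \<subseteq> g ` FT N d T"
      proof
        fix x assume x: "x \<in> P"
        then obtain n m where nm: "x = (n, m)" by (cases x) auto
        have n: "n < Dn N d" and m: "m < Dn N d" using x nm unfolding P_def by auto
        define f where "f = dig N d n"
        define f' where "f' = dig N d m"
        have f: "f \<in> Fs N d" and f': "f' \<in> Fs N d" using ep(4) n m unfolding f_def f'_def by auto
        define h where "h k = (if k \<in> T then 0 else f k)" for k
        have h: "h \<in> FT N d T"
          using f d T unfolding h_def FT_def Fs_def PiE_def Pi_def extensional_def by auto
        have fa: "ext T h a = f"
        proof
          fix k show "ext T h a k = f k"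
          proof (cases "k \<in> T")
            case True
            then have "k < N" using T by auto
            then show ?thesis using True x nm unfolding ext_def P_def f_def dig_def by auto
          qed (simp add: ext_def h_def)
        qed
        have fb: "ext T h b = f'"
        proof
          fix k show "ext T h b k = f' k"
          proof (cases "k \<in> T")
            case True
            then have "k < N" using T by auto
            then show ?thesis using True x nm unfolding ext_def P_def f'_def dig_def by auto
          next
            case False
            show ?thesis
            proof (cases "k < N")
              case True
              then show ?thesis using False x nm unfolding ext_def h_def P_def f_def f'_def dig_def by auto
            next
              case False
              then show ?thesis using \<open>k \<notin> T\<close> f f' unfolding ext_def h_def Fs_def PiE_def extensional_def by auto
            qed
          qed
        qed
        have "g h = x" unfolding g_def fa fb nm f_def f'_def using ep(3) n m by simp
        thus "x \<in> g ` FT N d T" using h by blast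
      qed
    qed
  qed
  have "(\<Sum>(n, m)\<in>P. V n * cnj (V m)) = (\<Sum>h\<in>FT N d T. (\<lambda>(n, m). V n * cnj (V m)) (g h))"
    using sum.reindex_bij_betw[OF bij, symmetric] by simp
  also have "\<dots> = G N d T (\<lambda>f. V (enc N d f)) a b" unfolding G_def g_def by simp
  finally show ?thesis unfolding P_def .
qed

lemma ext_bij:
  assumes d: "\<forall>k<N. d k \<ge> 1" and T: "T \<subseteq> {..<N}"
  shows "bij_betw (\<lambda>(h, g). ext T h g) (FT N d T \<times> AT d T) (Fs N d)"
proof (rule bij_betw_imageI)
  show "inj_on (\<lambda>(h, g). ext T h g) (FT N d T \<times> AT d T)"
  proof (rule inj_onI, clarify)
    fix h g h' g' assume h: "h \<in> FT N d T" and g: "g \<in> AT d T" and h': "h' \<in> FT N d T" and g': "g' \<in> AT d T"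
      and eq: "ext T h g = ext T h' g'"
    have "g = g'"
    proof
      fix k show "g k = g' k"
      proof (cases "k \<in> T")
        case True then show ?thesis using fun_cong[OF eq, of k] unfolding ext_def by simp
      next
        case False then show ?thesis using g g' unfolding AT_def PiE_def extensional_def by auto
      qed
    qed
    moreover have "h = h'" using ext_inj[OF T h h'] eq \<open>g = g'\<close> by simp
    ultimately show "h = h' \<and> g = g'" by simp
  qed
  show "(\<lambda>(h, g). ext T h g) ` (FT N d T \<times> AT d T) = Fs N d"
  proof
    show "(\<lambda>(h, g). ext T h g) ` (FT N d T \<times> AT d T) \<subseteq> Fs N d"
      using ext_in_Fs[OF T] unfolding FT_def by auto
    show "Fs N d \<subseteq> (\<lambda>(h, g). ext T h g) ` (FT N d T \<times> AT d T)"
    proof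
      fix f assume f: "f \<in> Fs N d"
      define h where "h k = (if k \<in> T then 0 else f k)" for k
      define g where "g = restrict f T"
      have h: "h \<in> FT N d T"
        using f d T unfolding h_def FT_def Fs_def PiE_def Pi_def extensional_def by auto
      have g: "g \<in> AT d T" using f T unfolding g_def AT_def Fs_def by auto
      have "ext T h g = f" unfolding ext_def h_def g_def by auto
      thus "f \<in> (\<lambda>(h, g). ext T h g) ` (FT N d T \<times> AT d T)" using h g by force
    qed
  qed
qed

lemma sum_Fs_reindex:
  assumes d: "\<forall>k<N. d k \<ge> 1" and T: "T \<subseteq> {..<N}"
  shows "(\<Sum>f\<in>Fs N d. X f) = (\<Sum>h\<in>FT N d T. \<Sum>g\<in>AT d T. X (ext T h g))"
proof -
  have "(\<Sum>f\<in>Fs N d. X f) = (\<Sum>p\<in>FT N d T \<times> AT d T. X ((\<lambda>(h, g). ext T h g) p))"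
    using sum.reindex_bij_betw[OF ext_bij[OF d T], symmetric] .
  also have "\<dots> = (\<Sum>(h, g)\<in>FT N d T \<times> AT d T. X (ext T h g))"
    by (intro sum.cong) auto
  also have "\<dots> = (\<Sum>h\<in>FT N d T. \<Sum>g\<in>AT d T. X (ext T h g))"
    by (rule sum.cartesian_product[symmetric])
  finally show ?thesis .
qed

lemma finite_Fs: "finite (Fs N d)" unfolding Fs_def by (simp add: finite_PiE)
lemma finite_FT: "finite (FT N d T)" unfolding FT_def using finite_Fs by simp
lemma finite_AT: "finite T \<Longrightarrow> finite (AT d T)" unfolding AT_def by (simp add: finite_PiE)

lemma FT_PiE:
  assumes d: "\<forall>k<N. d k \<ge> 1" and T: "T \<subseteq> {..<N}"
  shows "FT N d T = PiE {..<N} (\<lambda>k. if k \<in> T then {0} else {..<d k})"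
proof (intro equalityI subsetI)
  fix x assume "x \<in> FT N d T"
  then show "x \<in> PiE {..<N} (\<lambda>k. if k \<in> T then {0} else {..<d k})"
    using T unfolding FT_def Fs_def PiE_iff by auto
next
  fix x assume x: "x \<in> PiE {..<N} (\<lambda>k. if k \<in> T then {0} else {..<d k})"
  have "\<forall>k<N. x k < d k"
  proof (intro allI impI)
    fix k assume k: "k < N"
    have xk: "x k \<in> (if k \<in> T then {0} else {..<d k})" using x k unfolding PiE_iff by blast
    show "x k < d k"
    proof (cases "k \<in> T")
      case True then have "x k = 0" using xk by simp
      then show ?thesis using d k by auto
    next
      case False then show ?thesis using xk by simp
    qed
  qed
  moreover have "\<forall>k\<in>T. x k = 0"
  proof
    fix k assume k: "k \<in> T"
    then have "k < N" using T by auto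
    then have "x k \<in> (if k \<in> T then {0} else {..<d k})" using x unfolding PiE_iff by blast
    thus "x k = 0" using k by simp
  qed
  ultimately show "x \<in> FT N d T" using x unfolding FT_def Fs_def PiE_iff by auto
qed

definition rot :: "nat \<Rightarrow> (nat \<Rightarrow> nat) \<Rightarrow> (nat \<Rightarrow> nat \<Rightarrow> nat \<Rightarrow> complex) \<Rightarrow> ((nat \<Rightarrow> nat) \<Rightarrow> complex) \<Rightarrow> (nat \<Rightarrow> nat) \<Rightarrow> complex" where
  "rot N d U W g = (\<Sum>f\<in>Fs N d. W f * (\<Prod>k<N. cnj (U k (f k) (g k))))"

lemma prod_indicator:
  assumes "finite A"
  shows "(\<Prod>k\<in>A. if P k then 1 else (0::complex)) = (if \<forall>k\<in>A. P k then 1 else 0)"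
  using assms by (induction A rule: finite_induct) auto

lemma inner_sum:
  assumes d: "\<forall>k<N. d k \<ge> 1" and T: "T \<subseteq> {..<N}" and U: "\<forall>k<N. unit_f (d k) (U k)"
    and f: "f \<in> Fs N d" and f': "f' \<in> Fs N d"
  shows "(\<Sum>h\<in>FT N d T. (\<Prod>k<N. cnj (U k (f k) (ext T h a k))) * (\<Prod>k<N. U k (f' k) (ext T h b k)))
    = (if \<forall>k\<in>{..<N} - T. f k = f' k then (\<Prod>k\<in>T. cnj (U k (f k) (a k)) * U k (f' k) (b k)) else 0)"
proof -
  define B where "B k = (if k \<in> T then {0} else {..<d k})" for k
  define psi where "psi k c = cnj (U k (f k) (if k \<in> T then a k else c)) * U k (f' k) (if k \<in> T then b k else c)" for k c
  have "(\<Sum>h\<in>FT N d T. (\<Prod>k<N. cnj (U k (f k) (ext T h a k))) * (\<Prod>k<N. U k (f' k) (ext T h b k)))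
      = (\<Sum>h\<in>PiE {..<N} B. \<Prod>k<N. psi k (h k))"
    unfolding FT_PiE[OF d T] B_def[symmetric] psi_def ext_def
    by (intro sum.cong refl) (simp add: prod.distrib)
  also have "\<dots> = (\<Prod>k<N. \<Sum>c\<in>B k. psi k c)"
    by (rule prod_sum_PiE[symmetric]) (auto simp: B_def)
  also have "\<dots> = (\<Prod>k\<in>T. \<Sum>c\<in>B k. psi k c) * (\<Prod>k\<in>{..<N} - T. \<Sum>c\<in>B k. psi k c)"
    using T by (metis (no_types, lifting) finite_lessThan prod.subset_diff mult.commute)
  also have "(\<Prod>k\<in>T. \<Sum>c\<in>B k. psi k c) = (\<Prod>k\<in>T. cnj (U k (f k) (a k)) * U k (f' k) (b k))"
    by (intro prod.cong refl) (auto simp: B_def psi_def)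
  also have "(\<Prod>k\<in>{..<N} - T. \<Sum>c\<in>B k. psi k c) = (\<Prod>k\<in>{..<N} - T. if f k = f' k then 1 else 0)"
  proof (intro prod.cong refl)
    fix k assume k: "k \<in> {..<N} - T"
    have fk: "f k < d k" "f' k < d k" using f f' k unfolding Fs_def by auto
    have "(\<Sum>c\<in>B k. psi k c) = (\<Sum>c<d k. U k (f' k) c * cnj (U k (f k) c))"
      using k unfolding B_def psi_def by (auto simp: mult.commute)
    also have "\<dots> = idf (f' k) (f k)"
      using U k fk unfolding unit_f_def feq_def fmul_def fadj_def by auto
    finally show "(\<Sum>c\<in>B k. psi k c) = (if f k = f' k then 1 else 0)" unfolding idf_def by auto
  qed
  also have "\<dots> = (if \<forall>k\<in>{..<N} - T. f k = f' k then 1 else 0)"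
    by (rule prod_indicator) simp
  finally show ?thesis by simp
qed

lemma sum_delta_FT:
  assumes h: "h \<in> FT N d T"
  shows "(\<Sum>h'\<in>FT N d T. \<Sum>g'\<in>A. if h' = h then Y g' else (0::complex)) = (\<Sum>g'\<in>A. Y g')"
proof -
  have "(\<Sum>h'\<in>FT N d T. \<Sum>g'\<in>A. if h' = h then Y g' else (0::complex))
      = (\<Sum>h'\<in>FT N d T. if h' = h then (\<Sum>g'\<in>A. Y g') else 0)"
    by (intro sum.cong refl) auto
  also have "\<dots> = (\<Sum>g'\<in>A. Y g')" using h finite_FT by simp
  finally show ?thesis .
qed

lemma rot_G:
  assumes d: "\<forall>k<N. d k \<ge> 1" and T: "T \<subseteq> {..<N}" and U: "\<forall>k<N. unit_f (d k) (U k)"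
    and a: "a \<in> AT d T" and b: "b \<in> AT d T"
  shows "G N d T (rot N d U W) a b
    = (\<Sum>g\<in>AT d T. \<Sum>g'\<in>AT d T. (\<Prod>k\<in>T. cnj (U k (g k) (a k)) * U k (g' k) (b k)) * G N d T W g g')"
proof -
  have fT: "finite T" using T finite_subset by blast
  define pT where "pT f f' = (\<Prod>k\<in>T. cnj (U k (f k) (a k)) * U k (f' k) (b k))" for f f'
  define ag where "ag f f' = (\<forall>k\<in>{..<N} - T. f k = (f' k :: nat))" for f f'
  have "G N d T (rot N d U W) a b = (\<Sum>h\<in>FT N d T. \<Sum>f\<in>Fs N d. \<Sum>f'\<in>Fs N d.
      W f * cnj (W f') * ((\<Prod>k<N. cnj (U k (f k) (ext T h a k))) * (\<Prod>k<N. U k (f' k) (ext T h b k))))"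
    unfolding G_def rot_def
    by (simp add: cnj_sum sum_product algebra_simps)
  also have "\<dots> = (\<Sum>f\<in>Fs N d. \<Sum>f'\<in>Fs N d. W f * cnj (W f') *
      (\<Sum>h\<in>FT N d T. (\<Prod>k<N. cnj (U k (f k) (ext T h a k))) * (\<Prod>k<N. U k (f' k) (ext T h b k))))"
    by (simp add: sum_distrib_left sum.swap[of _ "FT N d T"])
  also have "\<dots> = (\<Sum>f\<in>Fs N d. \<Sum>f'\<in>Fs N d. if ag f f' then W f * cnj (W f') * pT f f' else 0)"
    by (intro sum.cong refl) (simp add: inner_sum[OF d T U] ag_def pT_def)
  also have "\<dots> = (\<Sum>h\<in>FT N d T. \<Sum>g\<in>AT d T. \<Sum>h'\<in>FT N d T. \<Sum>g'\<in>AT d T.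
      if ag (ext T h g) (ext T h' g') then W (ext T h g) * cnj (W (ext T h' g')) * pT (ext T h g) (ext T h' g') else 0)"
    by (simp add: sum_Fs_reindex[OF d T])
  also have "\<dots> = (\<Sum>h\<in>FT N d T. \<Sum>g\<in>AT d T. \<Sum>h'\<in>FT N d T. \<Sum>g'\<in>AT d T.
      if h' = h then W (ext T h g) * cnj (W (ext T h g')) * pT g g' else 0)"
  proof (intro sum.cong refl)
    fix h g h' g' assume h: "h \<in> FT N d T" and h': "h' \<in> FT N d T"
    have "ag (ext T h g) (ext T h' g') \<longleftrightarrow> h' = h"
    proof
      assume "ag (ext T h g) (ext T h' g')"
      show "h' = h"
      proof
        fix k show "h' k = h k"
        proof (cases "k \<in> T")
          case True then show ?thesis using h h' unfolding FT_def by auto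
        next
          case False
          show ?thesis
          proof (cases "k < N")
            case True then show ?thesis using False \<open>ag _ _\<close> unfolding ag_def ext_def by auto
          next
            case False then show ?thesis using \<open>k \<notin> T\<close> h h' unfolding FT_def Fs_def PiE_def extensional_def by auto
          qed
        qed
      qed
    qed (auto simp: ag_def ext_def)
    moreover have "pT (ext T h g) (ext T h g') = pT g g'" unfolding pT_def ext_def by simp
    ultimately show "(if ag (ext T h g) (ext T h' g') then W (ext T h g) * cnj (W (ext T h' g')) * pT (ext T h g) (ext T h' g') else 0)
       = (if h' = h then W (ext T h g) * cnj (W (ext T h g')) * pT g g' else 0)" by auto
  qed
  also have "\<dots> = (\<Sum>h\<in>FT N d T. \<Sum>g\<in>AT d T. \<Sum>g'\<in>AT d T. W (ext T h g) * cnj (W (ext T h g')) * pT g g')"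
    by (intro sum.cong[OF refl] sum_delta_FT) auto
  also have "\<dots> = (\<Sum>g\<in>AT d T. \<Sum>g'\<in>AT d T. pT g g' * G N d T W g g')"
    unfolding G_def by (simp add: sum_distrib_left sum.swap[of _ "FT N d T"] algebra_simps)
  finally show ?thesis unfolding pT_def .
qed

lemma idx_lt: "a < n1 \<Longrightarrow> b < n2 \<Longrightarrow> a + n1 * b < n1 * (n2::nat)"
proof -
  assume a: "a < n1" and b: "b < n2"
  have "a + n1 * b < n1 + n1 * b" using a by simp
  also have "n1 + n1 * b \<le> n1 * n2" using b by (metis Suc_leI mult_Suc_right mult_le_mono2)
  finally show ?thesis .
qed

lemma sum_split_nat:
  fixes f :: "nat \<Rightarrow> 'a::comm_monoid_add"
  shows "(\<Sum>x<n1 * n2. f x) = (\<Sum>a<n1. \<Sum>b<n2. f (a + n1 * b))"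
proof -
  have bij: "bij_betw (\<lambda>(a, b). a + n1 * b) ({..<n1} \<times> {..<n2}) {..<n1 * n2}"
  proof (rule bij_betw_imageI)
    show "inj_on (\<lambda>(a, b). a + n1 * b) ({..<n1} \<times> {..<n2})"
    proof (rule inj_onI)
      fix x y assume x: "x \<in> {..<n1} \<times> {..<n2}" and y: "y \<in> {..<n1} \<times> {..<n2}"
        and eq: "(\<lambda>(a, b). a + n1 * b) x = (\<lambda>(a, b). a + n1 * b) y"
      obtain a b where xab: "x = (a, b)" by (cases x)
      obtain a' b' where yab: "y = (a', b')" by (cases y)
      have a: "a < n1" "a' < n1" using x y xab yab by auto
      have e: "a + n1 * b = a' + n1 * b'" using eq xab yab by simp
      have "(a + n1 * b) mod n1 = a" "(a' + n1 * b') mod n1 = a'" using a by auto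
      moreover have "(a + n1 * b) div n1 = b" "(a' + n1 * b') div n1 = b'" using a by auto
      ultimately have "a = a'" "b = b'" using e by metis+
      thus "x = y" using xab yab by simp
    qed
    show "(\<lambda>(a, b). a + n1 * b) ` ({..<n1} \<times> {..<n2}) = {..<n1 * n2}"
    proof
      show "(\<lambda>(a, b). a + n1 * b) ` ({..<n1} \<times> {..<n2}) \<subseteq> {..<n1 * n2}"
        using idx_lt by auto
      show "{..<n1 * n2} \<subseteq> (\<lambda>(a, b). a + n1 * b) ` ({..<n1} \<times> {..<n2})"
      proof
        fix x assume "x \<in> {..<n1 * n2}"
        then have x: "x < n1 * n2" by simp
        then have "n1 > 0" by (cases n1) auto
        have "x mod n1 < n1" "x div n1 < n2" using \<open>n1 > 0\<close> x by (auto simp: less_mult_imp_div_less mult.commute)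
        moreover have "x = x mod n1 + n1 * (x div n1)" by simp
        ultimately show "x \<in> (\<lambda>(a, b). a + n1 * b) ` ({..<n1} \<times> {..<n2})" by force
      qed
    qed
  qed
  have "(\<Sum>x<n1 * n2. f x) = (\<Sum>p\<in>{..<n1} \<times> {..<n2}. f ((\<lambda>(a, b). a + n1 * b) p))"
    using sum.reindex_bij_betw[OF bij, symmetric] .
  also have "\<dots> = (\<Sum>(a,b)\<in>{..<n1} \<times> {..<n2}. f (a + n1 * b))" by (intro sum.cong) auto
  also have "\<dots> = (\<Sum>a<n1. \<Sum>b<n2. f (a + n1 * b))" by (rule sum.cartesian_product[symmetric])
  finally show ?thesis .
qed

lemma klein_scalar:
  fixes r s :: real
  assumes r: "r \<ge> 0" and s: "s > 0"
  shows "xlogx r - r * log 2 s \<ge> (r - s) / ln 2"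
    and "xlogx r - r * log 2 s = (r - s) / ln 2 \<Longrightarrow> r = s"
proof -
  have l2: "ln 2 > (0::real)" by simp
  have main: "xlogx r - r * log 2 s - (r - s) / ln 2 = (s - r - r * ln (s / r)) / ln 2" if "r > 0"
    using that s unfolding xlogx_def log_def by (simp add: ln_div field_simps)
  show "xlogx r - r * log 2 s \<ge> (r - s) / ln 2"
  proof (cases "r = 0")
    case True then show ?thesis using s l2 by (simp add: xlogx_def)
  next
    case False
    then have rp: "r > 0" using r by simp
    have "ln (s / r) \<le> s / r - 1" using rp s by (intro ln_le_minus_one) simp
    then have "r * ln (s / r) \<le> r * (s / r - 1)" using rp by (simp add: mult_left_mono)
    also have "\<dots> = s - r" using rp by (simp add: field_simps)
    finally have "s - r - r * ln (s / r) \<ge> 0" by simp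
    then have "(s - r - r * ln (s / r)) / ln 2 \<ge> 0" using l2 by simp
    then show ?thesis using main[OF rp] by linarith
  qed
  assume eq: "xlogx r - r * log 2 s = (r - s) / ln 2"
  show "r = s"
  proof (cases "r = 0")
    case True then show ?thesis using eq s l2 by (simp add: xlogx_def)
  next
    case False
    then have rp: "r > 0" using r by simp
    have "s - r - r * ln (s / r) = 0" using main[OF rp] eq l2 by simp
    then have "ln (s / r) = s / r - 1" using rp by (simp add: field_simps)
    then have "s / r = 1" using rp s by (intro ln_eq_minus_one) auto
    then show ?thesis using rp by simp
  qed
qed

lemma rel_eq_real:
  fixes n1 n2 :: nat and T :: "nat \<Rightarrow> nat \<Rightarrow> real" and r Dg p q :: "nat \<Rightarrow> real"
  defines "n \<equiv> n1 * n2"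
  assumes Tnn: "\<forall>k<n. \<forall>x<n. T k x \<ge> 0"
    and Tx: "\<forall>x<n. (\<Sum>k<n. T k x) = 1"
    and Tk: "\<forall>k<n. (\<Sum>x<n. T k x) = 1"
    and Dg: "\<forall>x<n. Dg x = (\<Sum>k<n. T k x * r k)"
    and rnn: "\<forall>k<n. r k \<ge> 0"
    and p: "\<forall>a<n1. p a = (\<Sum>b<n2. Dg (a + n1 * b))"
    and q: "\<forall>b<n2. q b = (\<Sum>a<n1. Dg (a + n1 * b))"
    and tr: "(\<Sum>a<n1. p a) = 1"
    and eqH: "(\<Sum>k<n. xlogx (r k)) = (\<Sum>a<n1. xlogx (p a)) + (\<Sum>b<n2. xlogx (q b))"
  shows "\<forall>a<n1. \<forall>b<n2. Dg (a + n1 * b) = p a * q b"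
proof -
  have l2: "ln 2 > (0::real)" by simp
  have idx: "a + n1 * b < n" if "a < n1" "b < n2" for a b
  proof -
    have "a + n1 * b < n1 + n1 * b" using that by simp
    also have "\<dots> \<le> n1 * n2" using that by (metis Suc_leI mult_Suc_right mult_le_mono2)
    finally show ?thesis unfolding n_def .
  qed
  have Dnn: "Dg x \<ge> 0" if "x < n" for x
    using Dg Tnn rnn that by (auto intro!: sum_nonneg)
  have Dle_p: "Dg (a + n1 * b) \<le> p a" if "a < n1" "b < n2" for a b
  proof -
    have "Dg (a + n1 * b) \<le> (\<Sum>b'<n2. Dg (a + n1 * b'))"
      using that by (intro member_le_sum) (auto intro!: Dnn idx)
    thus ?thesis using p that by simp
  qed
  have Dle_q: "Dg (a + n1 * b) \<le> q b" if "a < n1" "b < n2" for a b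
  proof -
    have "Dg (a + n1 * b) \<le> (\<Sum>a'<n1. Dg (a' + n1 * b))"
      using that by (intro member_le_sum) (auto intro!: Dnn idx)
    thus ?thesis using q that by simp
  qed
  have pnn: "p a \<ge> 0" if "a < n1" for a using p that Dnn idx by (auto intro!: sum_nonneg)
  have qnn: "q b \<ge> 0" if "b < n2" for b using q that Dnn idx by (auto intro!: sum_nonneg)
  have sumD: "(\<Sum>x<n. Dg x) = 1"
    unfolding n_def sum_split_nat using p tr by simp
  have trq: "(\<Sum>b<n2. q b) = 1"
  proof -
    have "(\<Sum>b<n2. q b) = (\<Sum>b<n2. \<Sum>a<n1. Dg (a + n1 * b))" using q by simp
    also have "\<dots> = (\<Sum>a<n1. \<Sum>b<n2. Dg (a + n1 * b))" by (rule sum.swap)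
    also have "\<dots> = 1" using p tr by simp
    finally show ?thesis .
  qed
  define s where "s x = p (x mod n1) * q (x div n1)" for x
  have s_ab: "s (a + n1 * b) = p a * q b" if "a < n1" for a b
    using that unfolding s_def by simp
  define L where "L x = (if s x > 0 then log 2 (s x) else 0)" for x
  define lg where "lg y = (if y > 0 then log 2 y else 0)" for y :: real
  have xlg: "xlogx y = y * lg y" if "y \<ge> 0" for y
    using that unfolding xlogx_def lg_def by auto
  have DL: "Dg (a + n1 * b) * L (a + n1 * b) = Dg (a + n1 * b) * (lg (p a) + lg (q b))" if "a < n1" "b < n2" for a b
  proof (cases "p a > 0 \<and> q b > 0")
    case True
    then have "L (a + n1 * b) = lg (p a) + lg (q b)"
      unfolding L_def lg_def s_ab[OF that(1)] using True by (simp add: log_mult)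
    thus ?thesis by simp
  next
    case False
    then have "p a = 0 \<or> q b = 0" using pnn qnn that by force
    then have "Dg (a + n1 * b) = 0" using Dle_p[OF that] Dle_q[OF that] Dnn[OF idx[OF that]] by auto
    thus ?thesis by simp
  qed
  have claim1: "(\<Sum>x<n. Dg x * L x) = (\<Sum>a<n1. xlogx (p a)) + (\<Sum>b<n2. xlogx (q b))"
  proof -
    have "(\<Sum>x<n. Dg x * L x) = (\<Sum>a<n1. \<Sum>b<n2. Dg (a + n1 * b) * (lg (p a) + lg (q b)))"
      unfolding n_def sum_split_nat using DL by (intro sum.cong refl) auto
    also have "\<dots> = (\<Sum>a<n1. \<Sum>b<n2. Dg (a + n1 * b) * lg (p a)) + (\<Sum>a<n1. \<Sum>b<n2. Dg (a + n1 * b) * lg (q b))"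
      by (simp add: distrib_left sum.distrib)
    also have "\<dots> = (\<Sum>a<n1. p a * lg (p a)) + (\<Sum>b<n2. q b * lg (q b))"
    proof -
      have "(\<Sum>a<n1. \<Sum>b<n2. Dg (a + n1 * b) * lg (p a)) = (\<Sum>a<n1. (\<Sum>b<n2. Dg (a + n1 * b)) * lg (p a))"
        by (simp add: sum_distrib_right)
      also have "\<dots> = (\<Sum>a<n1. p a * lg (p a))"
        by (intro sum.cong refl) (simp add: p)
      finally have 1: "(\<Sum>a<n1. \<Sum>b<n2. Dg (a + n1 * b) * lg (p a)) = (\<Sum>a<n1. p a * lg (p a))" .
      have "(\<Sum>a<n1. \<Sum>b<n2. Dg (a + n1 * b) * lg (q b)) = (\<Sum>b<n2. (\<Sum>a<n1. Dg (a + n1 * b)) * lg (q b))"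
        by (simp add: sum_distrib_right sum.swap[of _ "{..<n1}"])
      also have "\<dots> = (\<Sum>b<n2. q b * lg (q b))"
        by (intro sum.cong refl) (simp add: q)
      finally have 2: "(\<Sum>a<n1. \<Sum>b<n2. Dg (a + n1 * b) * lg (q b)) = (\<Sum>b<n2. q b * lg (q b))" .
      show ?thesis unfolding 1 2 ..
    qed
    also have "\<dots> = (\<Sum>a<n1. xlogx (p a)) + (\<Sum>b<n2. xlogx (q b))"
      using xlg pnn qnn by simp
    finally show ?thesis .
  qed
  define f where "f k x = T k x * (xlogx (r k) - r k * L x) - T k x * (r k - s x) / ln 2" for k x
  have xdec: "x mod n1 < n1 \<and> x div n1 < n2" if "x < n" for x
  proof -
    have "n1 > 0" using that unfolding n_def by (cases n1) auto
    thus ?thesis using that unfolding n_def by (auto simp: less_mult_imp_div_less mult.commute)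
  qed
  have xeq: "x = x mod n1 + n1 * (x div n1)" for x by simp
  have snn: "s x \<ge> 0" if "x < n" for x
    unfolding s_def using pnn qnn xdec[OF that] by simp
  have s0D: "Dg x = 0" if "x < n" "\<not> s x > 0" for x
  proof -
    have "s x = 0" using snn[OF that(1)] that(2) by simp
    then have "p (x mod n1) = 0 \<or> q (x div n1) = 0" unfolding s_def by simp
    moreover have "Dg x \<le> p (x mod n1)" "Dg x \<le> q (x div n1)"
      using Dle_p[of "x mod n1" "x div n1"] Dle_q[of "x mod n1" "x div n1"] xdec[OF that(1)] xeq[of x] by auto
    ultimately show ?thesis using Dnn[OF that(1)] by auto
  qed
  have fnn: "f k x \<ge> 0" if "k < n" "x < n" for k x
  proof (cases "s x > 0")
    case True
    have "xlogx (r k) - r k * L x \<ge> (r k - s x) / ln 2"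
      using klein_scalar(1)[OF rnn[rule_format, OF that(1)] True] True unfolding L_def by simp
    then have "T k x * (xlogx (r k) - r k * L x) \<ge> T k x * ((r k - s x) / ln 2)"
      using Tnn that by (intro mult_left_mono) auto
    thus ?thesis unfolding f_def by simp
  next
    case False
    have "Dg x = 0" using s0D[OF that(2) False] .
    then have "(\<Sum>k<n. T k x * r k) = 0" using Dg that by simp
    then have "T k x * r k = 0" using that Tnn rnn
      by (subst (asm) sum_nonneg_eq_0_iff) auto
    then have "T k x = 0 \<or> r k = 0" by simp
    moreover have "s x = 0" using False snn[OF that(2)] by simp
    ultimately show ?thesis unfolding f_def L_def using False by (auto simp: xlogx_def)
  qed
  have sum_f: "(\<Sum>k<n. \<Sum>x<n. f k x) = 0"
  proof -
    have A: "(\<Sum>k<n. \<Sum>x<n. T k x * (xlogx (r k) - r k * L x)) = (\<Sum>k<n. xlogx (r k)) - (\<Sum>x<n. Dg x * L x)"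
    proof -
      have "(\<Sum>k<n. \<Sum>x<n. T k x * (xlogx (r k) - r k * L x))
          = (\<Sum>k<n. \<Sum>x<n. T k x * xlogx (r k)) - (\<Sum>k<n. \<Sum>x<n. T k x * r k * L x)"
        by (simp add: right_diff_distrib sum_subtractf mult.assoc)
      also have "(\<Sum>k<n. \<Sum>x<n. T k x * r k * L x) = (\<Sum>x<n. \<Sum>k<n. T k x * r k * L x)"
        by (rule sum.swap)
      also have "\<dots> = (\<Sum>x<n. (\<Sum>k<n. T k x * r k) * L x)"
        by (simp add: sum_distrib_right)
      also have "(\<Sum>k<n. \<Sum>x<n. T k x * xlogx (r k)) = (\<Sum>k<n. (\<Sum>x<n. T k x) * xlogx (r k))"
        by (simp add: sum_distrib_right)
      also have "(\<Sum>k<n. (\<Sum>x<n. T k x) * xlogx (r k)) - (\<Sum>x<n. (\<Sum>k<n. T k x * r k) * L x) = (\<Sum>k<n. xlogx (r k)) - (\<Sum>x<n. Dg x * L x)"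
        using Tk Dg by simp
      finally show ?thesis .
    qed
    have B: "(\<Sum>k<n. \<Sum>x<n. T k x * (r k - s x) / ln 2) = ((\<Sum>k<n. r k) - (\<Sum>x<n. s x)) / ln 2"
    proof -
      have "(\<Sum>k<n. \<Sum>x<n. T k x * (r k - s x) / ln 2)
          = ((\<Sum>k<n. \<Sum>x<n. T k x * r k) - (\<Sum>k<n. \<Sum>x<n. T k x * s x)) / ln 2"
        by (simp add: right_diff_distrib sum_subtractf sum_divide_distrib[symmetric] diff_divide_distrib)
      also have "(\<Sum>k<n. \<Sum>x<n. T k x * s x) = (\<Sum>x<n. \<Sum>k<n. T k x * s x)"
        by (rule sum.swap)
      also have "\<dots> = (\<Sum>x<n. (\<Sum>k<n. T k x) * s x)"
        by (simp add: sum_distrib_right)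
      also have "(\<Sum>k<n. \<Sum>x<n. T k x * r k) = (\<Sum>k<n. (\<Sum>x<n. T k x) * r k)"
        by (simp add: sum_distrib_right)
      also have "((\<Sum>k<n. (\<Sum>x<n. T k x) * r k) - (\<Sum>x<n. (\<Sum>k<n. T k x) * s x)) / ln 2 = ((\<Sum>k<n. r k) - (\<Sum>x<n. s x)) / ln 2" using Tk Tx by simp
      finally show ?thesis .
    qed
    have sr: "(\<Sum>k<n. r k) = 1"
    proof -
      have "(\<Sum>k<n. r k) = (\<Sum>k<n. (\<Sum>x<n. T k x) * r k)" using Tk by simp
      also have "\<dots> = (\<Sum>k<n. \<Sum>x<n. T k x * r k)"
        by (simp add: sum_distrib_right)
      also have "\<dots> = (\<Sum>x<n. \<Sum>k<n. T k x * r k)"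
        by (rule sum.swap)
      also have "\<dots> = (\<Sum>x<n. Dg x)" using Dg by simp
      finally show ?thesis using sumD by simp
    qed
    have ss: "(\<Sum>x<n. s x) = 1"
    proof -
      have "(\<Sum>x<n. s x) = (\<Sum>a<n1. \<Sum>b<n2. p a * q b)" unfolding n_def sum_split_nat
        by (intro sum.cong refl) (simp add: s_ab)
      also have "\<dots> = (\<Sum>a<n1. p a) * (\<Sum>b<n2. q b)" by (simp add: sum_product)
      finally show ?thesis using tr trq by simp
    qed
    have "(\<Sum>k<n. \<Sum>x<n. f k x) = (\<Sum>k<n. \<Sum>x<n. T k x * (xlogx (r k) - r k * L x)) - (\<Sum>k<n. \<Sum>x<n. T k x * (r k - s x) / ln 2)"
      unfolding f_def by (simp add: sum_subtractf)
    also have "\<dots> = 0" unfolding A B sr ss claim1 eqH by simp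
    finally show ?thesis .
  qed
  have f0: "f k x = 0" if "k < n" "x < n" for k x
  proof -
    have "\<forall>k\<in>{..<n}. (\<Sum>x<n. f k x) = 0"
      using sum_f fnn by (subst (asm) sum_nonneg_eq_0_iff) (auto intro!: sum_nonneg)
    then have "(\<Sum>x<n. f k x) = 0" using that by auto
    thus ?thesis using fnn that by (subst (asm) sum_nonneg_eq_0_iff) auto
  qed
  have Ds: "Dg x = s x" if "x < n" for x
  proof (cases "s x > 0")
    case True
    have "T k x * r k = T k x * s x" if "k < n" for k
    proof (cases "T k x = 0")
      case False
      have "T k x * ((xlogx (r k) - r k * L x) - (r k - s x) / ln 2) = 0"
        using f0[OF that \<open>x < n\<close>] unfolding f_def by (simp add: algebra_simps)
      then have "xlogx (r k) - r k * log 2 (s x) = (r k - s x) / ln 2"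
        using False True unfolding L_def by simp
      then have "r k = s x" using klein_scalar(2)[OF rnn[rule_format, OF that] True] by simp
      thus ?thesis by simp
    qed simp
    then have "(\<Sum>k<n. T k x * r k) = (\<Sum>k<n. T k x * s x)" by (intro sum.cong refl) auto
    then have "Dg x = (\<Sum>k<n. T k x * s x)" using Dg that by simp
    also have "\<dots> = s x" using Tx that by (simp add: sum_distrib_right[symmetric])
    finally show ?thesis .
  next
    case False
    have "Dg x = 0" using s0D[OF that False] .
    moreover have "s x = 0" using False snn[OF that] by simp
    ultimately show ?thesis by simp
  qed
  show ?thesis using Ds idx s_ab by auto
qed

lemma xlogx_nonpos: "0 \<le> x \<Longrightarrow> x \<le> 1 \<Longrightarrow> xlogx x \<le> 0"
  unfolding xlogx_def by (auto simp: mult_nonneg_nonpos)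

lemma neg_xlogx_ge: "0 \<le> x \<Longrightarrow> x \<le> 1/2 \<Longrightarrow> - xlogx x \<ge> x"
proof -
  assume x: "0 \<le> x" "x \<le> 1/2"
  show ?thesis
  proof (cases "x = 0")
    case False
    then have xp: "x > 0" using x by simp
    have "log 2 x \<le> log 2 (1/2)" using xp x by simp
    also have "log 2 (1/2) = -1" by (simp add: log_divide)
    finally have "log 2 x \<le> -1" .
    then have "x * log 2 x \<le> x * (-1)" using xp by (intro mult_left_mono) auto
    thus ?thesis unfolding xlogx_def using False by simp
  qed (simp add: xlogx_def)
qed

lemma h_bound_small:
  fixes e :: real
  assumes e: "0 < e" "e \<le> 1/5"
  shows "- xlogx (1 - e) - xlogx e \<ge> 2 * e"
proof -
  have "log 2 e \<le> log 2 (1/5)" using e by simp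
  also have "log 2 (1/5) = - log 2 5" by (simp add: log_divide)
  finally have l1: "log 2 e \<le> - log 2 5" .
  have l5: "log 2 5 \<ge> 2"
  proof -
    have "log 2 (4::real) = 2"
      by (metis log2_of_power_eq mult_2 numeral_Bit0 of_nat_numeral power2_eq_square)
    moreover have "log 2 (4::real) \<le> log 2 5" by simp
    ultimately show ?thesis by simp
  qed
  have "log 2 e \<le> -2" using l1 l5 by linarith
  then have "e * log 2 e \<le> e * (-2)" using e by (intro mult_left_mono) auto
  then have "- xlogx e \<ge> 2 * e" unfolding xlogx_def using e by auto
  moreover have "xlogx (1 - e) \<le> 0" using e by (intro xlogx_nonpos) auto
  ultimately show ?thesis by simp
qed

lemma h_bound_mid:
  fixes e :: real
  assumes e: "1/5 \<le> e" "e \<le> 1/2"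
  shows "- xlogx (1 - e) - xlogx e \<ge> 2 * e"
proof -
  define f where "f x = - (1 - x) * ln (1 - x) - x * ln x - 2 * ln 2 * x" for x :: real
  have deriv: "(f has_real_derivative (ln (1 - x) - ln x - 2 * ln 2)) (at x)" if "0 < x" "x < 1" for x
  proof -
    have "(f has_real_derivative (- (-1) * ln (1 - x) - (1 - x) * ((-1) / (1 - x)) - (1 * ln x + x * (1 / x)) - 2 * ln 2 * 1)) (at x)"
    proof -
      have h: "(x - 1) / (1 - x) = -1" using that by (simp add: divide_eq_eq)
      show ?thesis unfolding f_def using that h by (auto intro!: derivative_eq_intros)
    qed
    moreover have "- (-1) * ln (1 - x) - (1 - x) * ((-1) / (1 - x)) - (1 * ln x + x * (1 / x)) - 2 * ln 2 * 1 = ln (1 - x) - ln x - 2 * ln 2"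
    proof -
      have "1 - x \<noteq> 0" "x \<noteq> 0" using that by auto
      thus ?thesis by (simp add: field_simps)
    qed
    ultimately show ?thesis by simp
  qed
  have "f (1/2) \<le> f e"
  proof (rule DERIV_nonpos_imp_nonincreasing[of e "1/2" f])
    show "e \<le> 1/2" using e by simp
    fix x assume x: "e \<le> x" "x \<le> 1/2"
    then have x0: "0 < x" "x < 1" using e by auto
    have "ln (1 - x) - ln x = ln ((1 - x) / x)" using x0 by (simp add: ln_div)
    also have "\<dots> \<le> ln 4"
    proof -
      have "(1 - x) / x \<le> 4" using x e x0 by (simp add: divide_le_eq)
      moreover have "(1 - x) / x > 0" using x0 by simp
      ultimately show ?thesis by simp
    qed
    also have "ln (4::real) = 2 * ln 2"
      by (metis ln_realpow mult_2 numeral_Bit0 of_nat_numeral power2_eq_square zero_less_numeral)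
    finally have "ln (1 - x) - ln x - 2 * ln 2 \<le> 0" by simp
    thus "\<exists>y. (f has_real_derivative y) (at x) \<and> y \<le> 0" using deriv[OF x0] by blast
  qed
  moreover have "f (1/2) = 0"
    unfolding f_def by (simp add: ln_div)
  ultimately have fe: "f e \<ge> 0" by simp
  have e0: "0 < e" "e < 1" using e by auto
  have "- xlogx (1 - e) - xlogx e - 2 * e = f e / ln 2"
    unfolding f_def xlogx_def log_def using e0 by (simp add: field_simps)
  moreover have "f e / ln 2 \<ge> 0" using fe by simp
  ultimately show ?thesis by linarith
qed

lemma h_bound:
  fixes e :: real
  assumes e: "0 \<le> e" "e \<le> 1/2"
  shows "- xlogx (1 - e) - xlogx e \<ge> 2 * e"
proof (cases "e = 0")
  case True then show ?thesis by (simp add: xlogx_def)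
next
  case False
  then show ?thesis using h_bound_small[of e] h_bound_mid[of e] e by linarith
qed

lemma entropy_nonneg:
  assumes "\<forall>b\<in>B. q b \<ge> 0 \<and> q b \<le> 1"
  shows "- (\<Sum>b\<in>B. xlogx (q b)) \<ge> 0"
proof -
  have "(\<Sum>b\<in>B. xlogx (q b)) \<le> 0" using assms by (intro sum_nonpos xlogx_nonpos) auto
  thus ?thesis by simp
qed

lemma entropy_min_bound:
  fixes q :: "nat \<Rightarrow> real"
  assumes qnn: "\<forall>b<m. q b \<ge> 0" and qs: "(\<Sum>b<m. q b) = 1" and j: "j < m"
    and jmax: "\<forall>b<m. q b \<le> q j"
  shows "- (\<Sum>b<m. xlogx (q b)) \<ge> min 1 (2 * (1 - q j))"
proof -
  have qle: "q b \<le> 1" if "b < m" for b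
  proof -
    have "q b \<le> (\<Sum>b<m. q b)" using that qnn by (intro member_le_sum) auto
    thus ?thesis using qs by simp
  qed
  show ?thesis
  proof (cases "q j \<le> 1/2")
    case True
    have "(\<Sum>b<m. q b) \<le> (\<Sum>b<m. - xlogx (q b))"
      using qnn jmax True by (intro sum_mono neg_xlogx_ge) (auto intro: order.trans)
    then have "- (\<Sum>b<m. xlogx (q b)) \<ge> 1" using qs by (simp add: sum_negf)
    thus ?thesis by simp
  next
    case False
    define e where "e = 1 - q j"
    have e: "0 \<le> e" "e < 1/2" using False qle[OF j] unfolding e_def by auto
    have rest: "(\<Sum>b\<in>{..<m} - {j}. q b) = e"
      using qs j unfolding e_def by (simp add: sum_diff1)
    have qb_le: "q b \<le> e" if "b \<in> {..<m} - {j}" for b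
    proof -
      have "q b \<le> (\<Sum>b\<in>{..<m} - {j}. q b)" using that qnn by (intro member_le_sum) auto
      thus ?thesis using rest by simp
    qed
    have other: "- xlogx (q b) \<ge> - q b * log 2 e" if "b \<in> {..<m} - {j}" for b
    proof (cases "q b = 0")
      case True then show ?thesis by (simp add: xlogx_def)
    next
      case False
      then have qp: "q b > 0" using qnn that by (simp add: order_less_le)
      then have "log 2 (q b) \<le> log 2 e" using qb_le[OF that] by simp
      then have "q b * log 2 (q b) \<le> q b * log 2 e" using qp by (intro mult_left_mono) auto
      thus ?thesis unfolding xlogx_def using False by simp
    qed
    have "(\<Sum>b\<in>{..<m} - {j}. - q b * log 2 e) \<le> (\<Sum>b\<in>{..<m} - {j}. - xlogx (q b))"
      using other by (intro sum_mono) auto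
    moreover have "(\<Sum>b\<in>{..<m} - {j}. - q b * log 2 e) = - xlogx e"
    proof (cases "e = 0")
      case True
      have "\<forall>b\<in>{..<m} - {j}. q b = 0" using qb_le qnn True by (metis DiffD1 lessThan_iff order.antisym)
      then show ?thesis using True by (simp add: xlogx_def)
    next
      case False
      have "(\<Sum>b\<in>{..<m} - {j}. - q b * log 2 e) = - (\<Sum>b\<in>{..<m} - {j}. q b) * log 2 e"
        by (simp add: sum_distrib_right sum_negf)
      thus ?thesis using rest False by (simp add: xlogx_def)
    qed
    ultimately have o: "(\<Sum>b\<in>{..<m} - {j}. - xlogx (q b)) \<ge> - xlogx e" by simp
    have "- (\<Sum>b<m. xlogx (q b)) = - xlogx (q j) + (\<Sum>b\<in>{..<m} - {j}. - xlogx (q b))"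
      using j by (simp add: sum.remove sum_negf)
    also have "\<dots> \<ge> - xlogx (1 - e) - xlogx e" using o unfolding e_def by simp
    finally have "- (\<Sum>b<m. xlogx (q b)) \<ge> - xlogx (1 - e) - xlogx e" .
    moreover have "- xlogx (1 - e) - xlogx e \<ge> 2 * e" using h_bound e by simp
    ultimately show ?thesis unfolding e_def by simp
  qed
qed

lemma bessel:
  fixes phi :: "'b \<Rightarrow> 'a \<Rightarrow> complex" and l :: "'b \<Rightarrow> real"
  assumes K: "finite K" and P: "finite P" and g0: "g0 \<in> K" and lpos: "\<forall>a\<in>P. l a > 0"
    and gram: "\<forall>a\<in>P. \<forall>b\<in>P. (\<Sum>h\<in>K. phi a h * cnj (phi b h)) = (if a = b then complex_of_real (l a) else 0)"
  shows "(\<Sum>a\<in>P. (cmod (phi a g0))^2 / l a) \<le> 1"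
proof -
  define c where "c a = cnj (phi a g0) / complex_of_real (l a)" for a
  define w where "w h = (\<Sum>a\<in>P. c a * phi a h)" for h
  define s where "s = (\<Sum>a\<in>P. (cmod (phi a g0))^2 / l a)"
  have snn: "s \<ge> 0" unfolding s_def using lpos by (intro sum_nonneg) auto
  have ww: "(\<Sum>h\<in>K. w h * cnj (w h)) = complex_of_real s"
  proof -
    have "(\<Sum>h\<in>K. w h * cnj (w h)) = (\<Sum>h\<in>K. \<Sum>a\<in>P. \<Sum>b\<in>P. c a * cnj (c b) * (phi a h * cnj (phi b h)))"
      unfolding w_def by (simp add: cnj_sum sum_product algebra_simps)
    also have "\<dots> = (\<Sum>a\<in>P. \<Sum>b\<in>P. c a * cnj (c b) * (\<Sum>h\<in>K. phi a h * cnj (phi b h)))"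
      by (simp add: sum_distrib_left sum.swap[of _ K])
    also have "\<dots> = (\<Sum>a\<in>P. \<Sum>b\<in>P. if a = b then c a * cnj (c a) * complex_of_real (l a) else 0)"
      using gram by (intro sum.cong refl) auto
    also have "\<dots> = (\<Sum>a\<in>P. c a * cnj (c a) * complex_of_real (l a))"
      using P by simp
    also have "\<dots> = (\<Sum>a\<in>P. complex_of_real ((cmod (phi a g0))^2 / l a))"
    proof (intro sum.cong refl)
      fix a assume a: "a \<in> P"
      have "c a * cnj (c a) * complex_of_real (l a) = (cnj (phi a g0) * phi a g0) / complex_of_real (l a)"
        unfolding c_def using lpos a by (simp add: field_simps power2_eq_square)
      also have "\<dots> = complex_of_real ((cmod (phi a g0))^2 / l a)"
        by (simp add: cmod_sq_eq[symmetric] mult.commute)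
      finally show "c a * cnj (c a) * complex_of_real (l a) = complex_of_real ((cmod (phi a g0))^2 / l a)" .
    qed
    also have "\<dots> = complex_of_real s" unfolding s_def by simp
    finally show ?thesis .
  qed
  have wg0: "w g0 = complex_of_real s"
  proof -
    have "w g0 = (\<Sum>a\<in>P. complex_of_real ((cmod (phi a g0))^2 / l a))"
      unfolding w_def c_def
    proof (intro sum.cong refl)
      fix a assume "a \<in> P"
      show "cnj (phi a g0) / complex_of_real (l a) * phi a g0 = complex_of_real ((cmod (phi a g0))^2 / l a)"
        by (simp add: cmod_sq_eq[symmetric] mult.commute)
    qed
    thus ?thesis unfolding s_def by simp
  qed
  have "(cmod (w g0))^2 \<le> (\<Sum>h\<in>K. (cmod (w h))^2)"
    using K g0 by (intro member_le_sum) auto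
  also have "complex_of_real (\<Sum>h\<in>K. (cmod (w h))^2) = (\<Sum>h\<in>K. w h * cnj (w h))"
    by (simp only: of_real_sum cmod_sq_eq)
  then have "(\<Sum>h\<in>K. (cmod (w h))^2) = s" using ww by (metis of_real_eq_iff)
  finally have "s^2 \<le> s" using wg0 snn by simp
  then have "s \<le> 1" using snn by (cases "s = 0") (auto simp: power2_eq_square)
  thus ?thesis unfolding s_def .
qed

lemma sum_le_union:
  fixes w :: "'a \<Rightarrow> real"
  assumes B: "finite B" and I: "finite I" and sub: "\<forall>i\<in>I. A i \<subseteq> B"
    and cov: "\<forall>x\<in>B. \<exists>i\<in>I. x \<in> A i" and wnn: "\<forall>x\<in>B. w x \<ge> 0"
  shows "(\<Sum>x\<in>B. w x) \<le> (\<Sum>i\<in>I. \<Sum>x\<in>A i. w x)"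
proof -
  have "(\<Sum>x\<in>B. w x) \<le> (\<Sum>x\<in>B. \<Sum>i\<in>I. if x \<in> A i then w x else 0)"
  proof (intro sum_mono)
    fix x assume x: "x \<in> B"
    then obtain i where i: "i \<in> I" "x \<in> A i" using cov by auto
    have "w x = (if x \<in> A i then w x else 0)" using i by simp
    also have "\<dots> \<le> (\<Sum>i\<in>I. if x \<in> A i then w x else 0)"
      using i I wnn x by (intro member_le_sum) auto
    finally show "w x \<le> (\<Sum>i\<in>I. if x \<in> A i then w x else 0)" .
  qed
  also have "\<dots> = (\<Sum>i\<in>I. \<Sum>x\<in>B. if x \<in> A i then w x else 0)" by (rule sum.swap)
  also have "\<dots> = (\<Sum>i\<in>I. \<Sum>x\<in>A i. w x)"
  proof -
    have "(\<Sum>x\<in>B. if x \<in> A i then w x else 0) = (\<Sum>x\<in>A i. w x)" if "i \<in> I" for i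
    proof -
      have "A i \<subseteq> B" using sub that by auto
      then have "B \<inter> A i = A i" by auto
      moreover have "(\<Sum>x\<in>B. if x \<in> A i then w x else 0) = (\<Sum>x\<in>B \<inter> A i. w x)"
        using B by (simp add: sum.inter_restrict)
      ultimately show ?thesis by simp
    qed
    thus ?thesis by (rule sum.cong[OF refl]) auto
  qed
  finally show ?thesis .
qed

lemma sum_FT_ext:
  assumes d: "\<forall>k<N. d k \<ge> 1" and T: "T \<subseteq> {..<N}" and a: "a \<in> AT d T"
  shows "(\<Sum>h\<in>FT N d T. X (ext T h a)) = (\<Sum>f\<in>{f\<in>Fs N d. \<forall>k\<in>T. f k = a k}. X f)"
proof -
  have bij: "bij_betw (\<lambda>h. ext T h a) (FT N d T) {f\<in>Fs N d. \<forall>k\<in>T. f k = a k}"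
  proof (rule bij_betw_imageI)
    show "inj_on (\<lambda>h. ext T h a) (FT N d T)"
      using ext_inj[OF T] by (auto intro!: inj_onI)
    show "(\<lambda>h. ext T h a) ` FT N d T = {f\<in>Fs N d. \<forall>k\<in>T. f k = a k}"
    proof
      show "(\<lambda>h. ext T h a) ` FT N d T \<subseteq> {f\<in>Fs N d. \<forall>k\<in>T. f k = a k}"
        using ext_in_Fs[OF T _ a] unfolding FT_def by (auto simp: ext_def)
      show "{f\<in>Fs N d. \<forall>k\<in>T. f k = a k} \<subseteq> (\<lambda>h. ext T h a) ` FT N d T"
      proof
        fix f assume f: "f \<in> {f\<in>Fs N d. \<forall>k\<in>T. f k = a k}"
        define h where "h k = (if k \<in> T then 0 else f k)" for k
        have h: "h \<in> FT N d T"
          using f d T unfolding h_def FT_def Fs_def PiE_def Pi_def extensional_def by auto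
        have "ext T h a = f" using f unfolding ext_def h_def by auto
        thus "f \<in> (\<lambda>h. ext T h a) ` FT N d T" using h by force
      qed
    qed
  qed
  show ?thesis using sum.reindex_bij_betw[OF bij] .
qed

definition lamW :: "nat \<Rightarrow> (nat \<Rightarrow> nat) \<Rightarrow> ((nat \<Rightarrow> nat) \<Rightarrow> complex) \<Rightarrow> nat \<Rightarrow> nat \<Rightarrow> real" where
  "lamW N d W k a = (\<Sum>f\<in>{f\<in>Fs N d. f k = a}. (cmod (W f))^2)"

lemma lamW_nonneg: "lamW N d W k a \<ge> 0"
  unfolding lamW_def by (intro sum_nonneg) auto

lemma lamW_sum:
  assumes k: "k < N" and Wn: "(\<Sum>f\<in>Fs N d. (cmod (W f))^2) = 1"
  shows "(\<Sum>a<d k. lamW N d W k a) = 1"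
proof -
  have "(\<Sum>a<d k. lamW N d W k a) = (\<Sum>f\<in>Fs N d. (cmod (W f))^2)"
    unfolding lamW_def
    by (rule sum.group) (use k in \<open>auto simp: finite_PiE Fs_def PiE_iff\<close>)
  thus ?thesis using Wn by simp
qed

lemma lamW_le1:
  assumes k: "k < N" and Wn: "(\<Sum>f\<in>Fs N d. (cmod (W f))^2) = 1" and a: "a < d k"
  shows "lamW N d W k a \<le> 1"
proof -
  have "lamW N d W k a \<le> (\<Sum>a<d k. lamW N d W k a)"
    using a lamW_nonneg by (intro member_le_sum) auto
  thus ?thesis using lamW_sum[OF k Wn] by simp
qed

lemma fin:
  fixes W :: "(nat \<Rightarrow> nat) \<Rightarrow> complex"
  assumes d: "\<forall>k<N. d k \<ge> 1" and N: "N \<ge> 1"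
    and Wn: "(\<Sum>f\<in>Fs N d. (cmod (W f))^2) = 1"
    and orth: "\<forall>a<d 0. \<forall>b<d 0. a \<noteq> b \<longrightarrow>
        (\<Sum>h\<in>FT N d {0}. W (ext {0} h (restrict (\<lambda>_. a) {0})) * cnj (W (ext {0} h (restrict (\<lambda>_. b) {0})))) = 0"
    and prodD: "\<forall>i. 1 \<le> i \<and> i < N \<longrightarrow> (\<forall>a<d 0. \<forall>b<d i.
        (\<Sum>f\<in>{f\<in>Fs N d. f 0 = a \<and> f i = b}. (cmod (W f))^2) = lamW N d W 0 a * lamW N d W i b)"
    and H0: "(\<Sum>a<d 0. xlogx (lamW N d W 0 a)) \<noteq> 0"
  shows "(\<Sum>k<N. - (\<Sum>a<d k. xlogx (lamW N d W k a))) > 1"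
proof -
  define lam where "lam = lamW N d W"
  define Hk where "Hk k = - (\<Sum>a<d k. xlogx (lam k a))" for k
  have T0: "{0} \<subseteq> {..<N}" using N by auto
  have lnn: "lam k a \<ge> 0" for k a unfolding lam_def by (rule lamW_nonneg)
  have lsum: "(\<Sum>a<d k. lam k a) = 1" if "k < N" for k unfolding lam_def by (rule lamW_sum[OF that Wn])
  have lle: "lam k a \<le> 1" if "k < N" "a < d k" for k a unfolding lam_def by (rule lamW_le1[OF that(1) Wn that(2)])
  have Hnn: "Hk k \<ge> 0" if "k < N" for k
    unfolding Hk_def using lnn lle[OF that] by (intro entropy_nonneg) auto
  obtain a1 a2 where a12: "a1 < d 0" "a2 < d 0" "a1 \<noteq> a2" "lam 0 a1 > 0" "lam 0 a2 > 0"
  proof -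
    obtain a1 where a1: "a1 < d 0" "lam 0 a1 > 0"
    proof (rule ccontr)
      assume "\<not> thesis"
      then have "\<forall>a<d 0. lam 0 a = 0" using that lnn by (metis order_less_le)
      then have "(\<Sum>a<d 0. lam 0 a) = 0" by simp
      thus False using lsum[of 0] N by simp
    qed
    show thesis
    proof (cases "\<exists>a2<d 0. a2 \<noteq> a1 \<and> lam 0 a2 > 0")
      case True
      then show ?thesis using that a1 by blast
    next
      case False
      then have z: "\<forall>a<d 0. a \<noteq> a1 \<longrightarrow> lam 0 a = 0" using lnn by (metis order_less_le)
      have "(\<Sum>a<d 0. lam 0 a) = lam 0 a1" using z a1 by (subst sum.remove[of _ a1]) auto
      then have "lam 0 a1 = 1" using lsum[of 0] N by simp
      moreover have "(\<Sum>a<d 0. xlogx (lam 0 a)) = xlogx (lam 0 a1)"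
        using z a1 by (subst sum.remove[of _ a1]) (auto simp: xlogx_def)
      ultimately have "(\<Sum>a<d 0. xlogx (lam 0 a)) = 0" by (simp add: xlogx_def)
      thus ?thesis using H0 unfolding lam_def by simp
    qed
  qed
  have "\<forall>i. \<exists>ji. i < N \<longrightarrow> ji < d i \<and> (\<forall>b<d i. lam i b \<le> lam i ji)"
  proof (intro allI)
    fix i
    show "\<exists>ji. i < N \<longrightarrow> ji < d i \<and> (\<forall>b<d i. lam i b \<le> lam i ji)"
    proof (cases "i < N")
      case True
      have ne: "lam i ` {..<d i} \<noteq> {}" using d True by (auto simp: Suc_le_eq)
      have "Max (lam i ` {..<d i}) \<in> lam i ` {..<d i}" using ne by (intro Max_in) auto
      then obtain ji where ji: "ji < d i" "lam i ji = Max (lam i ` {..<d i})" by auto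
      have "\<forall>b<d i. lam i b \<le> lam i ji" unfolding ji(2) by (auto intro!: Max_ge)
      thus ?thesis using ji by blast
    qed simp
  qed
  then obtain j where j: "\<forall>i<N. j i < d i \<and> (\<forall>b<d i. lam i b \<le> lam i (j i))"
    by metis
  define eps where "eps i = 1 - lam i (j i)" for i
  define E where "E = (\<Sum>i\<in>{1..<N}. eps i)"
  define g0 where "g0 = restrict (\<lambda>k. if k = 0 then 0 else j k) {..<N}"
  have g0: "g0 \<in> FT N d {0}"
    using j d N unfolding g0_def FT_def Fs_def by (auto simp: PiE_iff Suc_le_eq)
  define ga where "ga a = ext {0} g0 (restrict (\<lambda>_. a) {0})" for a
  have ga_eq: "ga a = restrict (\<lambda>k. if k = 0 then a else j k) {..<N}" for a
    using N unfolding ga_def g0_def ext_def by (auto simp: fun_eq_iff)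
  have ga_Fs: "ga a \<in> Fs N d" if "a < d 0" for a
    using j that N unfolding ga_eq Fs_def by (auto simp: PiE_iff)
  have ub: "(cmod (W (ga a)))^2 \<ge> lam 0 a * (1 - E)" if a: "a < d 0" for a
  proof -
    define S where "S = {f\<in>Fs N d. f 0 = a}"
    define A where "A i = {f\<in>Fs N d. f 0 = a \<and> f i \<noteq> j i}" for i
    have gaS: "ga a \<in> S" unfolding S_def using ga_Fs[OF a] N by (simp add: ga_eq)
    have finS: "finite S" unfolding S_def using finite_Fs by simp
    have "lam 0 a = (cmod (W (ga a)))^2 + (\<Sum>f\<in>S - {ga a}. (cmod (W f))^2)"
      unfolding lam_def lamW_def S_def[symmetric] using gaS finS by (simp add: sum.remove)
    also have "(\<Sum>f\<in>S - {ga a}. (cmod (W f))^2) \<le> (\<Sum>i\<in>{1..<N}. \<Sum>f\<in>A i. (cmod (W f))^2)"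
    proof (rule sum_le_union)
      show "finite (S - {ga a})" using finS by simp
      show "finite {1..<N}" by simp
      show "\<forall>i\<in>{1..<N}. A i \<subseteq> S - {ga a}"
      proof (intro ballI subsetI)
        fix i f assume i: "i \<in> {1..<N}" and f: "f \<in> A i"
        have "ga a i = j i" using i unfolding ga_eq by auto
        then have "f \<noteq> ga a" using f unfolding A_def by auto
        thus "f \<in> S - {ga a}" using f unfolding A_def S_def by auto
      qed
      show "\<forall>x\<in>S - {ga a}. \<exists>i\<in>{1..<N}. x \<in> A i"
      proof
        fix f assume f: "f \<in> S - {ga a}"
        show "\<exists>i\<in>{1..<N}. f \<in> A i"
        proof (rule ccontr)
          assume "\<not> ?thesis"
          then have fi: "\<forall>i\<in>{1..<N}. f i = j i" using f unfolding A_def S_def by auto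
          have "f = ga a"
          proof
            fix k show "f k = ga a k"
            proof (cases "k < N")
              case True then show ?thesis using fi f unfolding ga_eq S_def by (cases "k = 0") auto
            next
              case False then show ?thesis using f unfolding ga_eq S_def Fs_def PiE_def extensional_def by auto
            qed
          qed
          thus False using f by simp
        qed
      qed
      show "\<forall>x\<in>S - {ga a}. 0 \<le> (cmod (W x))^2" by simp
    qed
    also have "(\<Sum>i\<in>{1..<N}. \<Sum>f\<in>A i. (cmod (W f))^2) = (\<Sum>i\<in>{1..<N}. lam 0 a * eps i)"
    proof (rule sum.cong[OF refl])
      fix i assume i: "i \<in> {1..<N}"
      have ji: "j i < d i" using j i by auto
      have "(\<Sum>f\<in>A i. (cmod (W f))^2) = (\<Sum>b\<in>{..<d i} - {j i}. \<Sum>f\<in>{f\<in>A i. f i = b}. (cmod (W f))^2)"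
      proof (rule sum.group[symmetric])
        show "finite (A i)" unfolding A_def using finite_Fs by simp
        show "finite ({..<d i} - {j i})" by simp
        show "(\<lambda>f. f i) ` A i \<subseteq> {..<d i} - {j i}" using i unfolding A_def Fs_def by (auto simp: PiE_iff)
      qed
      also have "\<dots> = (\<Sum>b\<in>{..<d i} - {j i}. lam 0 a * lam i b)"
      proof (rule sum.cong[OF refl])
        fix b assume b: "b \<in> {..<d i} - {j i}"
        have "{f\<in>A i. f i = b} = {f\<in>Fs N d. f 0 = a \<and> f i = b}" using b unfolding A_def by auto
        thus "(\<Sum>f\<in>{f\<in>A i. f i = b}. (cmod (W f))^2) = lam 0 a * lam i b"
          using prodD i a b unfolding lam_def by auto
      qed
      also have "\<dots> = lam 0 a * ((\<Sum>b<d i. lam i b) - lam i (j i))"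
        using ji by (simp add: sum_distrib_left[symmetric] sum_diff1)
      also have "\<dots> = lam 0 a * eps i" using lsum[of i] i unfolding eps_def by simp
      finally show "(\<Sum>f\<in>A i. (cmod (W f))^2) = lam 0 a * eps i" .
    qed
    also have "\<dots> = lam 0 a * E" unfolding E_def by (simp add: sum_distrib_left)
    finally show ?thesis by (simp add: algebra_simps)
  qed
  define phi where "phi a h = W (ext {0} h (restrict (\<lambda>_. a) {0}))" for a h
  have gram: "\<forall>a\<in>{a1, a2}. \<forall>b\<in>{a1, a2}. (\<Sum>h\<in>FT N d {0}. phi a h * cnj (phi b h)) = (if a = b then complex_of_real (lam 0 a) else 0)"
  proof (intro ballI)
    fix a b assume a: "a \<in> {a1, a2}" and b: "b \<in> {a1, a2}"
    show "(\<Sum>h\<in>FT N d {0}. phi a h * cnj (phi b h)) = (if a = b then complex_of_real (lam 0 a) else 0)"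
    proof (cases "a = b")
      case True
      have aA: "restrict (\<lambda>_. a) {0} \<in> AT d {0}" using a a12 unfolding AT_def by auto
      have "(\<Sum>h\<in>FT N d {0}. phi a h * cnj (phi a h)) = (\<Sum>h\<in>FT N d {0}. complex_of_real ((cmod (phi a h))^2))"
        by (simp only: cmod_sq_eq)
      also have "\<dots> = complex_of_real (\<Sum>f\<in>{f\<in>Fs N d. \<forall>k\<in>{0}. f k = restrict (\<lambda>_. a) {0} k}. (cmod (W f))^2)"
        unfolding phi_def of_real_sum[symmetric] using sum_FT_ext[OF d T0 aA, of "\<lambda>f. (cmod (W f))^2"] by simp
      also have "\<dots> = complex_of_real (lam 0 a)" unfolding lam_def lamW_def by simp
      finally show ?thesis using True by simp
    next
      case False
      then show ?thesis using orth a b a12 unfolding phi_def by auto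
    qed
  qed
  have bes: "(\<Sum>a\<in>{a1, a2}. (cmod (phi a g0))^2 / lam 0 a) \<le> 1"
    by (rule bessel[OF finite_FT _ g0 _ gram]) (use a12 in auto)
  have phig: "phi a g0 = W (ga a)" for a unfolding phi_def ga_def ..
  have "2 * (1 - E) \<le> 1"
  proof -
    have "1 - E \<le> (cmod (phi a g0))^2 / lam 0 a" if "a \<in> {a1, a2}" for a
    proof -
      have "a < d 0" "lam 0 a > 0" using that a12 by auto
      then have "lam 0 a * (1 - E) \<le> (cmod (phi a g0))^2" using ub phig by simp
      thus ?thesis using \<open>lam 0 a > 0\<close> by (simp add: le_divide_eq mult.commute)
    qed
    then have "(\<Sum>a\<in>{a1, a2}. 1 - E) \<le> (\<Sum>a\<in>{a1, a2}. (cmod (phi a g0))^2 / lam 0 a)"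
      by (intro sum_mono) auto
    thus ?thesis using bes a12 by simp
  qed
  then have E: "E \<ge> 1/2" by simp
  have Hb: "Hk i \<ge> min 1 (2 * eps i)" if "i \<in> {1..<N}" for i
    unfolding Hk_def eps_def
    by (rule entropy_min_bound) (use that j lnn lsum in auto)
  have rest: "(\<Sum>i\<in>{1..<N}. Hk i) \<ge> 1"
  proof (cases "\<exists>i\<in>{1..<N}. Hk i \<ge> 1")
    case True
    then obtain i where i: "i \<in> {1..<N}" "Hk i \<ge> 1" by auto
    have "Hk i \<le> (\<Sum>i\<in>{1..<N}. Hk i)" using i Hnn by (intro member_le_sum) auto
    thus ?thesis using i by simp
  next
    case False
    then have "Hk i \<ge> 2 * eps i" if "i \<in> {1..<N}" for i using Hb[OF that] that by (auto simp: min_def split: if_splits)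
    then have "(\<Sum>i\<in>{1..<N}. 2 * eps i) \<le> (\<Sum>i\<in>{1..<N}. Hk i)" by (intro sum_mono) auto
    thus ?thesis using E unfolding E_def by (simp add: sum_distrib_left[symmetric])
  qed
  have H0pos: "Hk 0 > 0" using Hnn[of 0] N H0 unfolding Hk_def lam_def by simp
  have "(\<Sum>k<N. Hk k) = Hk 0 + (\<Sum>i\<in>{1..<N}. Hk i)"
  proof -
    have "{..<N} = insert 0 {1..<N}" using N by auto
    thus ?thesis by simp
  qed
  thus ?thesis using rest H0pos unfolding Hk_def lam_def by simp
qed

definition a1 :: "nat \<Rightarrow> nat \<Rightarrow> nat \<Rightarrow> nat" where
  "a1 i a = restrict (\<lambda>_. a) {i}"

definition a2 :: "(nat \<Rightarrow> nat) \<Rightarrow> nat \<Rightarrow> nat \<Rightarrow> nat \<Rightarrow> nat" where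
  "a2 d i x = restrict (\<lambda>k. if k = 0 then x mod d 0 else x div d 0) {0, i}"

lemma red1:
  assumes d: "\<forall>k<N. d k \<ge> 1" and i: "i < N" and a: "a < d i" and b: "b < d i"
  shows "reduced N d V [i] $$ (a, b) = G N d {i} (\<lambda>f. V (enc N d f)) (a1 i a) (a1 i b)"
proof -
  have T: "{i} \<subseteq> {..<N}" using i by auto
  have aA: "a1 i a \<in> AT d {i}" "a1 i b \<in> AT d {i}" using a b unfolding a1_def AT_def by auto
  have ld: "ldigit d [i] 0 x = x" if "x < d i" for x using that unfolding ldigit_def by simp
  have td: "tdim d [i] = d i" unfolding tdim_def by simp
  have "{(n, m). n < tdim d (sites N) \<and> m < tdim d (sites N)
        \<and> (\<forall>k<N. k \<notin> set [i] \<longrightarrow> ldigit d (sites N) k n = ldigit d (sites N) k m)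
        \<and> (\<forall>t<length [i]. ldigit d (sites N) ([i] ! t) n = ldigit d [i] t a
                       \<and> ldigit d (sites N) ([i] ! t) m = ldigit d [i] t b)}
      = {(n, m). n < Dn N d \<and> m < Dn N d
        \<and> (\<forall>k<N. k \<notin> {i} \<longrightarrow> ldigit d (sites N) k n = ldigit d (sites N) k m)
        \<and> (\<forall>k\<in>{i}. ldigit d (sites N) k n = a1 i a k \<and> ldigit d (sites N) k m = a1 i b k)}"
    using ld[OF a] ld[OF b] unfolding Dn_def a1_def by auto
  moreover have "reduced N d V [i] $$ (a, b) = (\<Sum>(n, m)\<in>{(n, m). n < tdim d (sites N) \<and> m < tdim d (sites N)
        \<and> (\<forall>k<N. k \<notin> set [i] \<longrightarrow> ldigit d (sites N) k n = ldigit d (sites N) k m)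
        \<and> (\<forall>t<length [i]. ldigit d (sites N) ([i] ! t) n = ldigit d [i] t a
                       \<and> ldigit d (sites N) ([i] ! t) m = ldigit d [i] t b)}. V n * cnj (V m))"
    unfolding reduced_def using a b td by simp
  ultimately show ?thesis using bridge[OF d T aA] by simp
qed

lemma red2:
  assumes d: "\<forall>k<N. d k \<ge> 1" and i: "i < N" "i \<noteq> 0" and x: "x < d 0 * d i" and y: "y < d 0 * d i"
  shows "reduced N d V [0, i] $$ (x, y) = G N d {0, i} (\<lambda>f. V (enc N d f)) (a2 d i x) (a2 d i y)"
proof -
  have T: "{0, i} \<subseteq> {..<N}" using i by auto
  have "1 \<le> d 0" using d i by auto
  then have d0: "d 0 > 0" by simp
  have dv: "z div d 0 < d i" if "z < d 0 * d i" for z using that by (simp add: less_mult_imp_div_less mult.commute)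
  have aA: "a2 d i x \<in> AT d {0, i}" "a2 d i y \<in> AT d {0, i}"
    using x y dv d0 i unfolding a2_def AT_def by auto
  have ld0: "ldigit d [0, i] 0 z = z mod d 0" for z unfolding ldigit_def by simp
  have ld1: "ldigit d [0, i] 1 z = z div d 0" if "z < d 0 * d i" for z
    using dv[OF that] unfolding ldigit_def by simp
  have td: "tdim d [0, i] = d 0 * d i" unfolding tdim_def by (simp add: lessThan_Suc)
  have all2: "(\<forall>t<length [0, i]. P t) \<longleftrightarrow> P 0 \<and> P 1" for P
    by (auto simp: less_Suc_eq)
  have "{(n, m). n < tdim d (sites N) \<and> m < tdim d (sites N)
        \<and> (\<forall>k<N. k \<notin> set [0, i] \<longrightarrow> ldigit d (sites N) k n = ldigit d (sites N) k m)
        \<and> (\<forall>t<length [0, i]. ldigit d (sites N) ([0, i] ! t) n = ldigit d [0, i] t x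
                       \<and> ldigit d (sites N) ([0, i] ! t) m = ldigit d [0, i] t y)}
      = {(n, m). n < Dn N d \<and> m < Dn N d
        \<and> (\<forall>k<N. k \<notin> {0, i} \<longrightarrow> ldigit d (sites N) k n = ldigit d (sites N) k m)
        \<and> (\<forall>k\<in>{0, i}. ldigit d (sites N) k n = a2 d i x k \<and> ldigit d (sites N) k m = a2 d i y k)}"
    unfolding all2 using ld0 ld1[OF x] ld1[OF y] i unfolding Dn_def a2_def by auto
  moreover have "reduced N d V [0, i] $$ (x, y) = (\<Sum>(n, m)\<in>{(n, m). n < tdim d (sites N) \<and> m < tdim d (sites N)
        \<and> (\<forall>k<N. k \<notin> set [0, i] \<longrightarrow> ldigit d (sites N) k n = ldigit d (sites N) k m)
        \<and> (\<forall>t<length [0, i]. ldigit d (sites N) ([0, i] ! t) n = ldigit d [0, i] t x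
                       \<and> ldigit d (sites N) ([0, i] ! t) m = ldigit d [0, i] t y)}. V n * cnj (V m))"
    unfolding reduced_def using x y td by simp
  ultimately show ?thesis using bridge[OF d T aA] by simp
qed

lemma G_herm: "cnj (G N d T W a b) = G N d T W b a"
  unfolding G_def by (simp add: cnj_sum mult.commute)

lemma bij_a1:
  "bij_betw (a1 i) {..<d i} (AT d {i})"
proof (rule bij_betw_imageI)
  show "inj_on (a1 i) {..<d i}"
    by (rule inj_onI) (metis a1_def restrict_apply' singletonI)
  show "a1 i ` {..<d i} = AT d {i}"
  proof
    show "a1 i ` {..<d i} \<subseteq> AT d {i}" unfolding a1_def AT_def
    proof (intro image_subsetI PiE_I)
      fix x k assume "x \<in> {..<d i}" "k \<in> {i}"
      then show "restrict (\<lambda>_. x) {i} k \<in> {..<d k}" by simp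
    next
      fix x k assume "k \<notin> {i}"
      then show "restrict (\<lambda>_. x) {i} k = undefined" by simp
    qed
    show "AT d {i} \<subseteq> a1 i ` {..<d i}"
    proof
      fix g assume g: "g \<in> AT d {i}"
      have "g = a1 i (g i)" using g unfolding a1_def AT_def PiE_def extensional_def by (auto simp: fun_eq_iff)
      moreover have "g i < d i" using g unfolding AT_def by auto
      ultimately show "g \<in> a1 i ` {..<d i}" by blast
    qed
  qed
qed

lemma bij_a2:
  assumes i: "i \<noteq> 0" and d0: "d 0 > 0"
  shows "bij_betw (a2 d i) {..<d 0 * d i} (AT d {0, i})"
proof (rule bij_betw_imageI)
  show "inj_on (a2 d i) {..<d 0 * d i}"
  proof (rule inj_onI)
    fix x y assume "a2 d i x = a2 d i y"
    moreover have "a2 d i z 0 = z mod d 0" "a2 d i z i = z div d 0" for z using i unfolding a2_def by auto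
    ultimately have "x mod d 0 = y mod d 0" "x div d 0 = y div d 0" by metis+
    thus "x = y" by (metis div_mult_mod_eq)
  qed
  show "a2 d i ` {..<d 0 * d i} = AT d {0, i}"
  proof
    show "a2 d i ` {..<d 0 * d i} \<subseteq> AT d {0, i}" unfolding a2_def AT_def
    proof (intro image_subsetI PiE_I)
      fix x k assume "x \<in> {..<d 0 * d i}" "k \<in> {0, i}"
      then show "restrict (\<lambda>k. if k = 0 then x mod d 0 else x div d 0) {0, i} k \<in> {..<d k}"
        using d0 i by (auto simp: less_mult_imp_div_less mult.commute)
    next
      fix x k assume "k \<notin> {0, i}"
      then show "restrict (\<lambda>k. if k = 0 then x mod d 0 else x div d 0) {0, i} k = undefined" by simp
    qed
    show "AT d {0, i} \<subseteq> a2 d i ` {..<d 0 * d i}"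
    proof
      fix g assume g: "g \<in> AT d {0, i}"
      have g0: "g 0 < d 0" and gi: "g i < d i" using g unfolding AT_def by auto
      define x where "x = g 0 + d 0 * g i"
      have x: "x < d 0 * d i" unfolding x_def using g0 gi by (rule idx_lt)
      have "x mod d 0 = g 0" "x div d 0 = g i" unfolding x_def using g0 by auto
      then have "g = a2 d i x" using g i unfolding a2_def AT_def PiE_def extensional_def by (auto simp: fun_eq_iff)
      thus "g \<in> a2 d i ` {..<d 0 * d i}" using x by blast
    qed
  qed
qed

definition Uhat :: "(nat \<Rightarrow> nat) \<Rightarrow> nat \<Rightarrow> (nat \<Rightarrow> nat \<Rightarrow> nat \<Rightarrow> complex) \<Rightarrow> nat \<Rightarrow> nat \<Rightarrow> complex" where
  "Uhat d i U x y = U 0 (x mod d 0) (y mod d 0) * U i (x div d 0) (y div d 0)"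

lemma unit_Uhat:
  assumes U0: "unit_f (d 0) (U 0)" and Ui: "unit_f (d i) (U i)" and d0: "d 0 > 0"
  shows "unit_f (d 0 * d i) (Uhat d i U)"
proof -
  let ?n = "d 0 * d i"
  have xs: "x mod d 0 < d 0" "x div d 0 < d i" if "x < ?n" for x
    using that d0 by (auto simp: less_mult_imp_div_less mult.commute)
  have eqx: "x = y \<longleftrightarrow> x mod d 0 = y mod d 0 \<and> x div d 0 = y div d 0" for x y :: nat
    by (metis div_mult_mod_eq)
  have 1: "fmul ?n (Uhat d i U) (fadj (Uhat d i U)) x y = idf x y" if "x < ?n" "y < ?n" for x y
  proof -
    have "fmul ?n (Uhat d i U) (fadj (Uhat d i U)) x y
        = (\<Sum>a<d 0. \<Sum>b<d i. (U 0 (x mod d 0) a * cnj (U 0 (y mod d 0) a)) * (U i (x div d 0) b * cnj (U i (y div d 0) b)))"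
      unfolding fmul_def fadj_def Uhat_def sum_split_nat using d0 by (intro sum.cong refl) (auto simp: algebra_simps)
    also have "\<dots> = (\<Sum>a<d 0. U 0 (x mod d 0) a * cnj (U 0 (y mod d 0) a)) * (\<Sum>b<d i. U i (x div d 0) b * cnj (U i (y div d 0) b))"
      by (simp add: sum_product)
    also have "\<dots> = idf (x mod d 0) (y mod d 0) * idf (x div d 0) (y div d 0)"
      using U0 Ui xs[OF that(1)] xs[OF that(2)] unfolding unit_f_def feq_def fmul_def fadj_def by auto
    also have "\<dots> = idf x y" unfolding idf_def using eqx[of x y] by auto
    finally show ?thesis .
  qed
  have 2: "fmul ?n (fadj (Uhat d i U)) (Uhat d i U) x y = idf x y" if "x < ?n" "y < ?n" for x y
  proof -
    have "fmul ?n (fadj (Uhat d i U)) (Uhat d i U) x y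
        = (\<Sum>a<d 0. \<Sum>b<d i. (cnj (U 0 a (x mod d 0)) * U 0 a (y mod d 0)) * (cnj (U i b (x div d 0)) * U i b (y div d 0)))"
      unfolding fmul_def fadj_def Uhat_def sum_split_nat using d0 by (intro sum.cong refl) (auto simp: algebra_simps)
    also have "\<dots> = (\<Sum>a<d 0. cnj (U 0 a (x mod d 0)) * U 0 a (y mod d 0)) * (\<Sum>b<d i. cnj (U i b (x div d 0)) * U i b (y div d 0))"
      by (simp add: sum_product)
    also have "\<dots> = idf (x mod d 0) (y mod d 0) * idf (x div d 0) (y div d 0)"
      using U0 Ui xs[OF that(1)] xs[OF that(2)] unfolding unit_f_def feq_def fmul_def fadj_def by auto
    also have "\<dots> = idf x y" unfolding idf_def using eqx[of x y] by auto
    finally show ?thesis .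
  qed
  show ?thesis unfolding unit_f_def feq_def using 1 2 by auto
qed

lemma unit_fadj: "unit_f n U \<Longrightarrow> unit_f n (fadj U)"
  unfolding unit_f_def by simp

lemma triple_swap:
  fixes l :: "'c \<Rightarrow> complex"
  shows "(\<Sum>x\<in>A. \<Sum>y\<in>B. \<Sum>c\<in>C. l c * g x c * h y c) = (\<Sum>c\<in>C. l c * (\<Sum>x\<in>A. g x c) * (\<Sum>y\<in>B. h y c))"
proof -
  have "(\<Sum>c\<in>C. l c * (\<Sum>x\<in>A. g x c) * (\<Sum>y\<in>B. h y c)) = (\<Sum>c\<in>C. \<Sum>x\<in>A. \<Sum>y\<in>B. l c * g x c * h y c)"
  proof (rule sum.cong[OF refl])
    fix c
    have "l c * (\<Sum>x\<in>A. g x c) * (\<Sum>y\<in>B. h y c) = (\<Sum>x\<in>A. l c * g x c) * (\<Sum>y\<in>B. h y c)"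
      by (simp add: sum_distrib_left)
    also have "\<dots> = (\<Sum>x\<in>A. \<Sum>y\<in>B. l c * g x c * h y c)" by (rule sum_product)
    finally show "l c * (\<Sum>x\<in>A. g x c) * (\<Sum>y\<in>B. h y c) = (\<Sum>x\<in>A. \<Sum>y\<in>B. l c * g x c * h y c)" .
  qed
  also have "\<dots> = (\<Sum>x\<in>A. \<Sum>c\<in>C. \<Sum>y\<in>B. l c * g x c * h y c)" by (rule sum.swap)
  also have "\<dots> = (\<Sum>x\<in>A. \<Sum>y\<in>B. \<Sum>c\<in>C. l c * g x c * h y c)"
    by (rule sum.cong[OF refl]) (rule sum.swap)
  finally show ?thesis by simp
qed

lemma rot_single:
  assumes d: "\<forall>k<N. d k \<ge> 1" and k: "k < N" and U: "\<forall>k<N. unit_f (d k) (U k)"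
    and dec: "\<forall>a<d k. \<forall>b<d k. G N d {k} W0 (a1 k a) (a1 k b) = (\<Sum>c<d k. U k a c * complex_of_real (lam c) * cnj (U k b c))"
    and a: "a < d k" and b: "b < d k"
  shows "G N d {k} (rot N d U W0) (a1 k a) (a1 k b) = (if a = b then complex_of_real (lam a) else 0)"
proof -
  have T: "{k} \<subseteq> {..<N}" using k by auto
  have aA: "a1 k a \<in> AT d {k}" "a1 k b \<in> AT d {k}" using bij_a1[of k d] a b by (auto simp: bij_betw_def)
  have a1k: "a1 k x k = x" for x unfolding a1_def by simp
  have Uk: "unit_f (d k) (U k)" using U k by auto
  have "G N d {k} (rot N d U W0) (a1 k a) (a1 k b)
      = (\<Sum>g\<in>AT d {k}. \<Sum>g'\<in>AT d {k}. (\<Prod>k'\<in>{k}. cnj (U k' (g k') (a1 k a k')) * U k' (g' k') (a1 k b k')) * G N d {k} W0 g g')"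
    by (rule rot_G[OF d T U aA])
  also have "\<dots> = (\<Sum>x<d k. \<Sum>y<d k. cnj (U k x a) * U k y b * G N d {k} W0 (a1 k x) (a1 k y))"
    by (simp add: sum.reindex_bij_betw[OF bij_a1, symmetric] a1k)
  also have "\<dots> = (\<Sum>x<d k. \<Sum>y<d k. \<Sum>c<d k. complex_of_real (lam c) * (cnj (U k x a) * U k x c) * (cnj (U k y c) * U k y b))"
  proof (intro sum.cong refl)
    fix x y assume "x \<in> {..<d k}" "y \<in> {..<d k}"
    then have "G N d {k} W0 (a1 k x) (a1 k y) = (\<Sum>c<d k. U k x c * complex_of_real (lam c) * cnj (U k y c))"
      using dec by auto
    then show "cnj (U k x a) * U k y b * G N d {k} W0 (a1 k x) (a1 k y) =
      (\<Sum>c<d k. complex_of_real (lam c) * (cnj (U k x a) * U k x c) * (cnj (U k y c) * U k y b))"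
      by (simp add: sum_distrib_left mult_ac)
  qed
  also have "\<dots> = (\<Sum>c<d k. complex_of_real (lam c) * (\<Sum>x<d k. cnj (U k x a) * U k x c) * (\<Sum>y<d k. cnj (U k y c) * U k y b))"
    by (rule triple_swap)
  also have "\<dots> = (\<Sum>c<d k. complex_of_real (lam c) * idf a c * idf c b)"
  proof (intro sum.cong refl)
    fix c assume c: "c \<in> {..<d k}"
    have "(\<Sum>x<d k. cnj (U k x a) * U k x c) = idf a c" "(\<Sum>y<d k. cnj (U k y c) * U k y b) = idf c b"
      using Uk a b c unfolding unit_f_def feq_def fmul_def fadj_def by auto
    thus "complex_of_real (lam c) * (\<Sum>x<d k. cnj (U k x a) * U k x c) * (\<Sum>y<d k. cnj (U k y c) * U k y b)
        = complex_of_real (lam c) * idf a c * idf c b" by simp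
  qed
  also have "\<dots> = (if a = b then complex_of_real (lam a) else 0)"
  proof -
    have "(\<Sum>c<d k. complex_of_real (lam c) * idf a c * idf c b) = (\<Sum>c<d k. if c = a then (if a = b then complex_of_real (lam a) else 0) else 0)"
      unfolding idf_def by (intro sum.cong refl) auto
    also have "\<dots> = (if a = b then complex_of_real (lam a) else 0)" using a by simp
    finally show ?thesis .
  qed
  finally show ?thesis .
qed

lemma rot_pair:
  assumes d: "\<forall>k<N. d k \<ge> 1" and i: "i < N" "i \<noteq> 0" and U: "\<forall>k<N. unit_f (d k) (U k)"
    and x: "x < d 0 * d i" and y: "y < d 0 * d i"
  shows "G N d {0, i} (rot N d U W0) (a2 d i x) (a2 d i y)
    = fmul (d 0 * d i) (fadj (Uhat d i U)) (fmul (d 0 * d i) (\<lambda>x y. G N d {0, i} W0 (a2 d i x) (a2 d i y)) (Uhat d i U)) x y"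
proof -
  let ?n = "d 0 * d i"
  have T: "{0, i} \<subseteq> {..<N}" using i by auto
  have "1 \<le> d 0" using d i by auto
  then have d0: "d 0 > 0" by simp
  note bij = bij_a2[of i d, OF i(2) d0]
  have aA: "a2 d i x \<in> AT d {0, i}" "a2 d i y \<in> AT d {0, i}" using bij x y by (auto simp: bij_betw_def)
  have a2v: "a2 d i z 0 = z mod d 0" "a2 d i z i = z div d 0" for z unfolding a2_def using i by auto
  have pr: "(\<Prod>k\<in>{0, i}. cnj (U k (a2 d i x' k) (a2 d i x k)) * U k (a2 d i y' k) (a2 d i y k))
      = cnj (Uhat d i U x' x) * Uhat d i U y' y" for x' y'
    using i by (simp add: Uhat_def a2v)
  have "G N d {0, i} (rot N d U W0) (a2 d i x) (a2 d i y)
      = (\<Sum>g\<in>AT d {0, i}. \<Sum>g'\<in>AT d {0, i}. (\<Prod>k\<in>{0, i}. cnj (U k (g k) (a2 d i x k)) * U k (g' k) (a2 d i y k)) * G N d {0, i} W0 g g')"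
    by (rule rot_G[OF d T U aA])
  also have "\<dots> = (\<Sum>x'<?n. \<Sum>y'<?n. (\<Prod>k\<in>{0, i}. cnj (U k (a2 d i x' k) (a2 d i x k)) * U k (a2 d i y' k) (a2 d i y k)) * G N d {0, i} W0 (a2 d i x') (a2 d i y'))"
    by (simp add: sum.reindex_bij_betw[OF bij, symmetric])
  also have "\<dots> = (\<Sum>x'<?n. \<Sum>y'<?n. cnj (Uhat d i U x' x) * (G N d {0, i} W0 (a2 d i x') (a2 d i y') * Uhat d i U y' y))"
    unfolding pr by (simp add: algebra_simps)
  also have "\<dots> = fmul ?n (fadj (Uhat d i U)) (fmul ?n (\<lambda>x y. G N d {0, i} W0 (a2 d i x) (a2 d i y)) (Uhat d i U)) x y"
    unfolding fmul_def fadj_def by (simp add: sum_distrib_left)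
  finally show ?thesis .
qed

lemma psd_eig:
  fixes A :: "'h \<Rightarrow> nat \<Rightarrow> complex"
  assumes Z: "unit_f n Z" and K: "finite K"
    and gram: "\<forall>x<n. \<forall>y<n. M x y = (\<Sum>h\<in>K. A h x * cnj (A h y))"
    and dec: "\<forall>x<n. \<forall>y<n. M x y = (\<Sum>l<n. Z x l * complex_of_real (r l) * cnj (Z y l))"
    and k: "k < n"
  shows "r k \<ge> 0"
proof -
  have "(\<Sum>x<n. \<Sum>y<n. cnj (Z x k) * M x y * Z y k) = (\<Sum>x<n. \<Sum>y<n. \<Sum>l<n. complex_of_real (r l) * (cnj (Z x k) * Z x l) * (cnj (Z y l) * Z y k))"
  proof (intro sum.cong refl)
    fix x y assume "x \<in> {..<n}" "y \<in> {..<n}"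
    then have "M x y = (\<Sum>l<n. Z x l * complex_of_real (r l) * cnj (Z y l))" using dec by auto
    then show "cnj (Z x k) * M x y * Z y k = (\<Sum>l<n. complex_of_real (r l) * (cnj (Z x k) * Z x l) * (cnj (Z y l) * Z y k))"
      by (simp add: sum_distrib_left sum_distrib_right mult_ac)
  qed
  also have "\<dots> = (\<Sum>l<n. complex_of_real (r l) * (\<Sum>x<n. cnj (Z x k) * Z x l) * (\<Sum>y<n. cnj (Z y l) * Z y k))"
    by (rule triple_swap)
  also have "\<dots> = (\<Sum>l<n. complex_of_real (r l) * idf k l * idf l k)"
  proof (intro sum.cong refl)
    fix l assume l: "l \<in> {..<n}"
    have "(\<Sum>x<n. cnj (Z x k) * Z x l) = idf k l" "(\<Sum>y<n. cnj (Z y l) * Z y k) = idf l k"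
      using Z k l unfolding unit_f_def feq_def fmul_def fadj_def by auto
    thus "complex_of_real (r l) * (\<Sum>x<n. cnj (Z x k) * Z x l) * (\<Sum>y<n. cnj (Z y l) * Z y k) = complex_of_real (r l) * idf k l * idf l k"
      by simp
  qed
  also have "\<dots> = complex_of_real (r k)"
  proof -
    have "(\<Sum>l<n. complex_of_real (r l) * idf k l * idf l k) = (\<Sum>l<n. if l = k then complex_of_real (r k) else 0)"
      unfolding idf_def by (intro sum.cong refl) auto
    thus ?thesis using k by simp
  qed
  finally have rk: "complex_of_real (r k) = (\<Sum>x<n. \<Sum>y<n. cnj (Z x k) * M x y * Z y k)" by simp
  have "(\<Sum>x<n. \<Sum>y<n. cnj (Z x k) * M x y * Z y k) = (\<Sum>x<n. \<Sum>y<n. \<Sum>h\<in>K. (cnj (Z x k) * A h x) * (Z y k * cnj (A h y)))"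
  proof (intro sum.cong refl)
    fix x y assume "x \<in> {..<n}" "y \<in> {..<n}"
    then have "M x y = (\<Sum>h\<in>K. A h x * cnj (A h y))" using gram by auto
    then show "cnj (Z x k) * M x y * Z y k = (\<Sum>h\<in>K. (cnj (Z x k) * A h x) * (Z y k * cnj (A h y)))"
      by (simp add: sum_distrib_left sum_distrib_right mult_ac)
  qed
  also have "\<dots> = (\<Sum>h\<in>K. (\<Sum>x<n. cnj (Z x k) * A h x) * (\<Sum>y<n. Z y k * cnj (A h y)))"
    using triple_swap[where A="{..<n}" and B="{..<n}" and C=K and l="\<lambda>_. 1" and g="\<lambda>x h. cnj (Z x k) * A h x" and h="\<lambda>y h. Z y k * cnj (A h y)"] by simp
  also have "\<dots> = (\<Sum>h\<in>K. (\<Sum>x<n. cnj (Z x k) * A h x) * cnj (\<Sum>y<n. cnj (Z y k) * A h y))"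
    by (simp add: cnj_sum)
  also have "\<dots> = complex_of_real (\<Sum>h\<in>K. (cmod (\<Sum>x<n. cnj (Z x k) * A h x))^2)"
    by (simp only: of_real_sum cmod_sq_eq)
  finally have "r k = (\<Sum>h\<in>K. (cmod (\<Sum>x<n. cnj (Z x k) * A h x))^2)" using rk by (metis of_real_eq_iff)
  thus ?thesis by (simp add: sum_nonneg)
qed

lemma G_diag:
  assumes d: "\<forall>k<N. d k \<ge> 1" and T: "T \<subseteq> {..<N}" and a: "a \<in> AT d T"
  shows "G N d T W a a = complex_of_real (\<Sum>f\<in>{f\<in>Fs N d. \<forall>k\<in>T. f k = a k}. (cmod (W f))^2)"
proof -
  have "G N d T W a a = (\<Sum>h\<in>FT N d T. complex_of_real ((cmod (W (ext T h a)))^2))"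
    unfolding G_def by (simp only: cmod_sq_eq)
  also have "\<dots> = complex_of_real (\<Sum>h\<in>FT N d T. (cmod (W (ext T h a)))^2)" by simp
  also have "(\<Sum>h\<in>FT N d T. (cmod (W (ext T h a)))^2) = (\<Sum>f\<in>{f\<in>Fs N d. \<forall>k\<in>T. f k = a k}. (cmod (W f))^2)"
    by (rule sum_FT_ext[OF d T a])
  finally show ?thesis .
qed

lemma pair_lemma:
  assumes d: "\<forall>k<N. d k \<ge> 1" and i: "i < N" "i \<noteq> 0" and U: "\<forall>k<N. unit_f (d k) (U k)"
    and W0: "W0 = (\<lambda>f. V (enc N d f))" and W1: "W1 = rot N d U W0"
    and W1n: "(\<Sum>f\<in>Fs N d. (cmod (W1 f))^2) = 1"
    and Hsum: "H N d V [0, i] = H N d V [0] + H N d V [i]"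
    and H0: "H N d V [0] = - (\<Sum>a<d 0. xlogx (lamW N d W1 0 a))"
    and Hi: "H N d V [i] = - (\<Sum>a<d i. xlogx (lamW N d W1 i a))"
  shows "\<forall>a<d 0. \<forall>b<d i. (\<Sum>f\<in>{f\<in>Fs N d. f 0 = a \<and> f i = b}. (cmod (W1 f))^2) = lamW N d W1 0 a * lamW N d W1 i b"
proof -
  define n where "n = d 0 * d i"
  have "1 \<le> d 0" using d i by auto
  then have d0: "d 0 > 0" by simp
  have T: "{0, i} \<subseteq> {..<N}" using i by auto
  have N0: "0 < N" using i by auto
  define Mf where "Mf x y = G N d {0, i} W0 (a2 d i x) (a2 d i y)" for x y
  have hMf: "herm n Mf" unfolding herm_def feq_def fadj_def Mf_def by (simp add: G_herm)
  obtain Z r where Z: "unit_f n Z" and decf: "feq n Mf (fmul n (fmul n Z (fdiag r)) (fadj Z))"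
    using spectral_f[OF hMf] by blast
  have red: "reduced N d V [0, i] $$ (x, y) = Mf x y" if "x < n" "y < n" for x y
    using red2[OF d i that[unfolded n_def]] unfolding Mf_def W0 by simp
  have td: "tdim d [0, i] = n" unfolding tdim_def n_def by (simp add: lessThan_Suc mult.commute)
  have carr: "reduced N d V [0, i] \<in> carrier_mat n n"
    unfolding reduced_def td by simp
  have H0i: "H N d V [0, i] = - (\<Sum>k<n. xlogx (r k))"
    unfolding H_def
  proof (rule entropy_decomp[OF carr Z])
    show "\<forall>x<n. \<forall>y<n. reduced N d V [0, i] $$ (x, y) = (\<Sum>k<n. Z x k * complex_of_real (r k) * cnj (Z y k))"
      using decf red unfolding feq_def fmul_fdiag by auto
  qed
  define Uh where "Uh = Uhat d i U"
  have Uh: "unit_f n Uh" unfolding Uh_def n_def using U i d0 by (intro unit_Uhat) auto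
  define M1 where "M1 x y = G N d {0, i} W1 (a2 d i x) (a2 d i y)" for x y
  have M1eq: "feq n M1 (fmul n (fadj Uh) (fmul n Mf Uh))"
    unfolding feq_def M1_def Mf_def Uh_def n_def W1 using rot_pair[OF d i U] by auto
  define Z1 where "Z1 = fmul n (fadj Uh) Z"
  have Z1: "unit_f n Z1" unfolding Z1_def by (rule unit_f_mult[OF unit_fadj[OF Uh] Z])
  have dec1f: "feq n M1 (fmul n (fmul n Z1 (fdiag r)) (fadj Z1))"
  proof -
    have "feq n (fmul n (fadj Uh) (fmul n Mf Uh)) (fmul n (fadj Uh) (fmul n (fmul n (fmul n Z (fdiag r)) (fadj Z)) Uh))"
      using decf by (intro fmul_cong) auto
    moreover have "fmul n (fadj Uh) (fmul n (fmul n (fmul n Z (fdiag r)) (fadj Z)) Uh) = fmul n (fmul n Z1 (fdiag r)) (fadj Z1)"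
      unfolding Z1_def by (simp add: fmul_assoc fadj_fmul)
    ultimately show ?thesis using M1eq by (metis feq_trans)
  qed
  have dec1: "\<forall>x<n. \<forall>y<n. M1 x y = (\<Sum>k<n. Z1 x k * complex_of_real (r k) * cnj (Z1 y k))"
    using dec1f unfolding feq_def fmul_fdiag by auto
  have rnn: "\<forall>k<n. r k \<ge> 0"
  proof (intro allI impI)
    fix k assume k: "k < n"
    show "r k \<ge> 0"
    proof (rule psd_eig[OF Z1 finite_FT _ dec1 k])
      show "\<forall>x<n. \<forall>y<n. M1 x y = (\<Sum>h\<in>FT N d {0, i}. W1 (ext {0, i} h (a2 d i x)) * cnj (W1 (ext {0, i} h (a2 d i y))))"
        unfolding M1_def G_def by simp
    qed
  qed
  define Tm where "Tm k x = (cmod (Z1 x k))^2" for k x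
  have Tx: "\<forall>x<n. (\<Sum>k<n. Tm k x) = 1"
  proof (intro allI impI)
    fix x assume x: "x < n"
    have "fmul n Z1 (fadj Z1) x x = 1" using Z1 x unfolding unit_f_def feq_def idf_def by auto
    then have "complex_of_real (\<Sum>k<n. Tm k x) = 1"
      unfolding Tm_def fmul_def fadj_def of_real_sum by (simp only: cmod_sq_eq)
    thus "(\<Sum>k<n. Tm k x) = 1" by (metis of_real_eq_1_iff)
  qed
  have Tk: "\<forall>k<n. (\<Sum>x<n. Tm k x) = 1"
  proof (intro allI impI)
    fix k assume k: "k < n"
    have "fmul n (fadj Z1) Z1 k k = 1" using Z1 k unfolding unit_f_def feq_def idf_def by auto
    then have "complex_of_real (\<Sum>x<n. Tm k x) = 1"
      unfolding Tm_def fmul_def fadj_def of_real_sum by (simp only: cmod_sq_eq mult.commute)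
    thus "(\<Sum>x<n. Tm k x) = 1" by (metis of_real_eq_1_iff)
  qed
  have Tnn: "\<forall>k<n. \<forall>x<n. Tm k x \<ge> 0" unfolding Tm_def by simp
  define Dg where "Dg x = (\<Sum>f\<in>{f\<in>Fs N d. f 0 = x mod d 0 \<and> f i = x div d 0}. (cmod (W1 f))^2)" for x
  have a2A: "a2 d i x \<in> AT d {0, i}" if "x < n" for x
    using bij_a2[of i d, OF i(2) d0] that unfolding n_def by (auto simp: bij_betw_def)
  have set_eq: "{f\<in>Fs N d. \<forall>k\<in>{0, i}. f k = a2 d i x k} = {f\<in>Fs N d. f 0 = x mod d 0 \<and> f i = x div d 0}" for x
    using i unfolding a2_def by auto
  have DgT: "\<forall>x<n. Dg x = (\<Sum>k<n. Tm k x * r k)"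
  proof (intro allI impI)
    fix x assume x: "x < n"
    have "M1 x x = complex_of_real (Dg x)"
      unfolding M1_def Dg_def G_diag[OF d T a2A[OF x]] set_eq ..
    moreover have "M1 x x = complex_of_real (\<Sum>k<n. Tm k x * r k)"
      using dec1 x unfolding Tm_def by (simp add: cmod_sq_eq[symmetric] mult_ac)
    ultimately show "Dg x = (\<Sum>k<n. Tm k x * r k)" by (metis of_real_eq_iff)
  qed
  have Dg_ab: "Dg (a + d 0 * b) = (\<Sum>f\<in>{f\<in>Fs N d. f 0 = a \<and> f i = b}. (cmod (W1 f))^2)" if "a < d 0" for a b
    unfolding Dg_def using that by simp
  have marg0: "lamW N d W1 0 a = (\<Sum>b<d i. Dg (a + d 0 * b))" if a: "a < d 0" for a
  proof -
    have "lamW N d W1 0 a = (\<Sum>b<d i. \<Sum>f\<in>{f\<in>{f\<in>Fs N d. f 0 = a}. f i = b}. (cmod (W1 f))^2)"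
      unfolding lamW_def
    proof (rule sum.group[symmetric])
      show "finite {f\<in>Fs N d. f 0 = a}" using finite_Fs by simp
      show "(\<lambda>f. f i) ` {f\<in>Fs N d. f 0 = a} \<subseteq> {..<d i}" using i unfolding Fs_def by (auto simp: PiE_iff)
    qed simp
    also have "\<dots> = (\<Sum>b<d i. Dg (a + d 0 * b))"
    proof (rule sum.cong[OF refl])
      fix b
      have "{f\<in>{f\<in>Fs N d. f 0 = a}. f i = b} = {f\<in>Fs N d. f 0 = a \<and> f i = b}" by auto
      thus "(\<Sum>f\<in>{f\<in>{f\<in>Fs N d. f 0 = a}. f i = b}. (cmod (W1 f))^2) = Dg (a + d 0 * b)"
        using Dg_ab[OF a] by simp
    qed
    finally show ?thesis .
  qed
  have margi: "lamW N d W1 i b = (\<Sum>a<d 0. Dg (a + d 0 * b))" if b: "b < d i" for b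
  proof -
    have "lamW N d W1 i b = (\<Sum>a<d 0. \<Sum>f\<in>{f\<in>{f\<in>Fs N d. f i = b}. f 0 = a}. (cmod (W1 f))^2)"
      unfolding lamW_def
    proof (rule sum.group[symmetric])
      show "finite {f\<in>Fs N d. f i = b}" using finite_Fs by simp
      show "(\<lambda>f. f 0) ` {f\<in>Fs N d. f i = b} \<subseteq> {..<d 0}" using N0 unfolding Fs_def by (auto simp: PiE_iff)
    qed simp
    also have "\<dots> = (\<Sum>a<d 0. Dg (a + d 0 * b))"
    proof (rule sum.cong[OF refl])
      fix a assume "a \<in> {..<d 0}"
      have "{f\<in>{f\<in>Fs N d. f i = b}. f 0 = a} = {f\<in>Fs N d. f 0 = a \<and> f i = b}" by auto
      thus "(\<Sum>f\<in>{f\<in>{f\<in>Fs N d. f i = b}. f 0 = a}. (cmod (W1 f))^2) = Dg (a + d 0 * b)"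
        using Dg_ab \<open>a \<in> {..<d 0}\<close> by simp
    qed
    finally show ?thesis .
  qed
  have tr: "(\<Sum>a<d 0. lamW N d W1 0 a) = 1" using lamW_sum[OF N0 W1n] .
  have eqH: "(\<Sum>k<n. xlogx (r k)) = (\<Sum>a<d 0. xlogx (lamW N d W1 0 a)) + (\<Sum>b<d i. xlogx (lamW N d W1 i b))"
    using Hsum H0i H0 Hi by simp
  have res: "\<forall>a<d 0. \<forall>b<d i. Dg (a + d 0 * b) = lamW N d W1 0 a * lamW N d W1 i b"
    by (rule rel_eq_real[of "d 0" "d i" Tm Dg r, folded n_def])
       (use Tnn Tx Tk DgT rnn marg0 margi tr eqH in auto)
  show ?thesis using res Dg_ab by auto
qed

theorem theorem1:
  fixes N :: nat and d :: "nat \<Rightarrow> nat" and V :: "nat \<Rightarrow> complex"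
  assumes "N \<ge> 1"
    and "\<forall>k<N. d k \<ge> 1"
    and "(\<Sum>n<tdim d (sites N). (cmod (V n))\<^sup>2) = 1"
    and "H N d V [0] \<noteq> 0"
    and "\<forall>i. 1 \<le> i \<and> i < N \<longrightarrow> mutual_info N d V 0 i = 0"
  shows "(\<Sum>i<N. H N d V [i]) > 1"
proof -
  note N = assms(1) and d = assms(2) and Vn = assms(3) and Hne = assms(4) and MI = assms(5)
  define W0 where "W0 = (\<lambda>f. V (enc N d f))"
  have W0n: "(\<Sum>f\<in>Fs N d. (cmod (W0 f))^2) = 1"
  proof -
    have "(\<Sum>f\<in>Fs N d. (cmod (W0 f))^2) = (\<Sum>n\<in>{..<Dn N d}. (cmod (W0 (dig N d n)))^2)"
      by (rule sum.reindex_bij_betw[OF bij_dig[OF d], symmetric])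
    also have "\<dots> = (\<Sum>n<Dn N d. (cmod (V n))^2)"
      unfolding W0_def by (intro sum.cong refl) (simp add: enc_props(3)[OF d])
    finally show ?thesis using Vn unfolding Dn_def by simp
  qed
  have "\<forall>k. \<exists>p. k < N \<longrightarrow> unit_f (d k) (fst p) \<and>
      (\<forall>a<d k. \<forall>b<d k. G N d {k} W0 (a1 k a) (a1 k b) = (\<Sum>c<d k. fst p a c * complex_of_real (snd p c) * cnj (fst p b c)))"
  proof
    fix k
    show "\<exists>p. k < N \<longrightarrow> unit_f (d k) (fst p) \<and>
      (\<forall>a<d k. \<forall>b<d k. G N d {k} W0 (a1 k a) (a1 k b) = (\<Sum>c<d k. fst p a c * complex_of_real (snd p c) * cnj (fst p b c)))"
    proof -
      have "herm (d k) (\<lambda>a b. G N d {k} W0 (a1 k a) (a1 k b))"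
        unfolding herm_def feq_def fadj_def by (simp add: G_herm)
      from spectral[OF this] obtain Uk lk where "unit_f (d k) Uk"
        "\<forall>a<d k. \<forall>b<d k. G N d {k} W0 (a1 k a) (a1 k b) = (\<Sum>c<d k. Uk a c * complex_of_real (lk c) * cnj (Uk b c))"
        by blast
      thus ?thesis by (intro exI[of _ "(Uk, lk)"]) simp
    qed
  qed
  from choice[OF this] obtain P where P: "\<forall>k. k < N \<longrightarrow> unit_f (d k) (fst (P k)) \<and>
      (\<forall>a<d k. \<forall>b<d k. G N d {k} W0 (a1 k a) (a1 k b) = (\<Sum>c<d k. fst (P k) a c * complex_of_real (snd (P k) c) * cnj (fst (P k) b c)))"
    by blast
  define U where "U k = fst (P k)" for k
  define lam where "lam k = snd (P k)" for k
  have U: "\<forall>k<N. unit_f (d k) (U k)" using P unfolding U_def by auto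
  have decU: "\<forall>a<d k. \<forall>b<d k. G N d {k} W0 (a1 k a) (a1 k b) = (\<Sum>c<d k. U k a c * complex_of_real (lam k c) * cnj (U k b c))"
    if "k < N" for k using P that unfolding U_def lam_def by auto
  define W1 where "W1 = rot N d U W0"
  have G1: "G N d {k} W1 (a1 k a) (a1 k b) = (if a = b then complex_of_real (lam k a) else 0)"
    if "k < N" "a < d k" "b < d k" for k a b
    unfolding W1_def using rot_single[OF d that(1) U decU[OF that(1)] that(2,3)] .
  have lamW_eq: "lamW N d W1 k a = lam k a" if "k < N" "a < d k" for k a
  proof -
    have T: "{k} \<subseteq> {..<N}" using that by auto
    have aA: "a1 k a \<in> AT d {k}" using bij_a1[of k d] that by (auto simp: bij_betw_def)
    have se: "{f\<in>Fs N d. \<forall>k'\<in>{k}. f k' = a1 k a k'} = {f\<in>Fs N d. f k = a}" unfolding a1_def by auto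
    have "complex_of_real (lamW N d W1 k a) = G N d {k} W1 (a1 k a) (a1 k a)"
      unfolding G_diag[OF d T aA] se lamW_def ..
    also have "\<dots> = complex_of_real (lam k a)" using G1[OF that that(2)] by simp
    finally show ?thesis by (metis of_real_eq_iff)
  qed
  have Hk: "H N d V [k] = - (\<Sum>a<d k. xlogx (lamW N d W1 k a))" if k: "k < N" for k
  proof -
    have td: "tdim d [k] = d k" unfolding tdim_def by simp
    have carr: "reduced N d V [k] \<in> carrier_mat (d k) (d k)" unfolding reduced_def td by simp
    have "H N d V [k] = - (\<Sum>a<d k. xlogx (lam k a))"
      unfolding H_def
    proof (rule entropy_decomp[OF carr U[rule_format, OF k]])
      show "\<forall>i<d k. \<forall>j<d k. reduced N d V [k] $$ (i, j) = (\<Sum>c<d k. U k i c * complex_of_real (lam k c) * cnj (U k j c))"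
        using red1[OF d k] decU[OF k] unfolding W0_def by auto
    qed
    also have "\<dots> = - (\<Sum>a<d k. xlogx (lamW N d W1 k a))" using lamW_eq[OF k] by simp
    finally show ?thesis .
  qed
  have W1n: "(\<Sum>f\<in>Fs N d. (cmod (W1 f))^2) = 1"
  proof -
    define u :: "nat \<Rightarrow> nat" where "u = (\<lambda>_. undefined)"
    have AT0: "AT d {} = {u}" unfolding AT_def u_def by simp
    have FT0: "FT N d {} = Fs N d" unfolding FT_def by simp
    have ext0: "ext {} h u = h" for h unfolding ext_def by simp
    have Gd: "G N d {} W u u = complex_of_real (\<Sum>f\<in>Fs N d. (cmod (W f))^2)" for W
      unfolding G_def FT0 ext0 of_real_sum by (simp only: cmod_sq_eq)
    have "G N d {} W1 u u = G N d {} W0 u u"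
      unfolding W1_def using rot_G[OF d _ U, of "{}" u u W0] AT0 by simp
    then show ?thesis using W0n unfolding Gd by (metis of_real_eq_iff)
  qed
  have orth: "\<forall>a<d 0. \<forall>b<d 0. a \<noteq> b \<longrightarrow>
        (\<Sum>h\<in>FT N d {0}. W1 (ext {0} h (restrict (\<lambda>_. a) {0})) * cnj (W1 (ext {0} h (restrict (\<lambda>_. b) {0})))) = 0"
    using G1[of 0] N unfolding G_def a1_def by auto
  have prodD: "\<forall>i. 1 \<le> i \<and> i < N \<longrightarrow> (\<forall>a<d 0. \<forall>b<d i.
        (\<Sum>f\<in>{f\<in>Fs N d. f 0 = a \<and> f i = b}. (cmod (W1 f))^2) = lamW N d W1 0 a * lamW N d W1 i b)"
  proof (rule allI, rule impI)
    fix i assume i: "1 \<le> i \<and> i < N"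
    have H0': "H N d V [0] = - (\<Sum>a<d 0. xlogx (lamW N d W1 0 a))" using Hk N by simp
    have Hi': "H N d V [i] = - (\<Sum>a<d i. xlogx (lamW N d W1 i a))" using Hk i by simp
    have Hs: "H N d V [0, i] = H N d V [0] + H N d V [i]"
      using MI i unfolding mutual_info_def by auto
    show "\<forall>a<d 0. \<forall>b<d i. (\<Sum>f\<in>{f\<in>Fs N d. f 0 = a \<and> f i = b}. (cmod (W1 f))^2) = lamW N d W1 0 a * lamW N d W1 i b"
      by (rule pair_lemma[OF d _ _ U W0_def W1_def W1n Hs H0' Hi']) (use i in auto)
  qed
  have H0: "(\<Sum>a<d 0. xlogx (lamW N d W1 0 a)) \<noteq> 0" using Hne Hk[of 0] N by simp
  have "(\<Sum>k<N. - (\<Sum>a<d k. xlogx (lamW N d W1 k a))) > 1"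
    by (rule fin[OF d N W1n orth prodD H0])
  moreover have "(\<Sum>i<N. H N d V [i]) = (\<Sum>k<N. - (\<Sum>a<d k. xlogx (lamW N d W1 k a)))"
    using Hk by simp
  ultimately show ?thesis by simp
qed

end
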